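(* Let $n\ge2$. The sequences $0\to I_n^{0,1}\hookrightarrow\Sigma(B_n)\xrightarrow{\beta^2}\Sigma(B_{n-2})\to0$ and $0\to\mathring{\mathcal{P}}_n\hookrightarrow\mathcal{P}_n\xrightarrow{\pi}\mathcal{P}_{n-2}\to0$ are exact, the maps $\varphi:I_n^{0,1}\to\mathring{\mathcal{P}}_n$, $\varphi:\Sigma(B_n)\to\mathcal{P}_n$ and $\varphi:\Sigma(B_{n-2})\to\mathcal{P}_{n-2}$ are well defined and surjective, and the resulting diagram commutes, i.e. $\pi\circ\varphi=\varphi\circ\beta^2$ on $\Sigma(B_n)$.
   Context: $B_m$: signed permutations $w=w_1\dots w_m$ of $[m]$, values ordered $\cdots<-2<-1<1<2<\cdots$, $w_0=0$, $\mathrm{Des}(w)=\{i\in\{0,\dots,m-1\}: w_i>w_{i+1}\}$; $X_J=\sum_{\mathrm{Des}(w)\subseteq J}w$ for $J\subseteq\{0,\dots,m-1\}$; $\Sigma(B_m)=\mathrm{span}\{X_J\}$ (descent algebra, a subalgebra of $\mathbb{Q}B_m$). $\beta^2:\Sigma(B_n)\to\Sigma(B_{n-2})$ is the linear map with $X_J\mapsto X_{J-2}$ if $0,1\notin J$ and $X_J\mapsto0$ otherwise ($J-2=\{j-2:j\in J\}$). $I_n^{0,1}=\mathrm{span}\{X_J: 0\in J\text{ or }1\in J\}$. $\varphi$ forgets signs: $w\mapsto|w_1|\dots|w_m|$, extended linearly. For $u\in\mathfrak{S}_m$, $\mathrm{Peak}(u)=\{i\in[m-1]: u_{i-1}<u_i>u_{i+1}\}$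 with $u_0=0$ and $\mathring{\mathrm{Peak}}(u)=\mathrm{Peak}(u)\setminus\{1\}$. $\mathcal{F}_m$: subsets of $[m-1]$ with no two consecutive integers; $\mathring{\mathcal{F}}_m=\{F\in\mathcal{F}_m:1\notin F\}$; $P_F=\sum_{\mathrm{Peak}(u)=F}u$, $\mathring{P}_F=\sum_{\mathring{\mathrm{Peak}}(u)=F}u$; $\mathcal{P}_m=\mathrm{span}\{P_F:F\in\mathcal{F}_m\}$, $\mathring{\mathcal{P}}_n=\mathrm{span}\{\mathring{P}_F:F\in\mathring{\mathcal{F}}_n\}$; $\mathcal{P}_0=\mathcal{P}_1=\mathbb{Q}$. $\pi:\mathcal{P}_n\to\mathcal{P}_{n-2}$ is the linear map with $P_F\mapsto P_{F-2}$ if $1,2\notin F$; $P_F\mapsto-P_{(F\setminus\{1\})-2}$ if $1\in F$; $P_F\mapsto0$ if $2\in F$. *)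

theory Defs
  imports Complex_Main
begin

text \<open>Elements of the group algebras QB_m and QS_m are represented as coefficient
functions on words (int lists): an element is a map int list => rat, the
coefficient of the word w.\<close>

type_synonym elt = "int list \<Rightarrow> rat"

definition signed_perms :: "nat \<Rightarrow> int list set" where
  "signed_perms m = {w. length w = m \<and> distinct (map abs w) \<and> set (map abs w) = {1..int m}}"

definition perms :: "nat \<Rightarrow> int list set" where
  "perms m = {u. length u = m \<and> distinct u \<and> set u = {1..int m}}"

text \<open>1-indexed letter with the convention w_0 = 0.\<close>
definition wval :: "int list \<Rightarrow> nat \<Rightarrow> int" where
  "wval w i = (if i = 0 then 0 else w ! (i - 1))"

definition Des :: "int list \<Rightarrow> nat set" where
  "Des w = {i \<in> {0..<length w}. wval w i > wval w (Suc i)}"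

definition X :: "nat \<Rightarrow> nat set \<Rightarrow> elt" where
  "X m J = (\<lambda>w. if w \<in> signed_perms m \<and> Des w \<subseteq> J then 1 else 0)"

definition shift2 :: "nat set \<Rightarrow> nat set" where
  "shift2 J = (\<lambda>j. j - 2) ` J"

definition SigmaB :: "nat \<Rightarrow> elt set" where
  "SigmaB m = {f. \<exists>c. f = (\<lambda>w. \<Sum>J\<in>Pow {0..<m}. c J * X m J w)}"

definition I01 :: "nat \<Rightarrow> elt set" where
  "I01 n = {f. \<exists>c. f = (\<lambda>w. \<Sum>J\<in>{J\<in>Pow {0..<n}. 0 \<in> J \<or> 1 \<in> J}. c J * X n J w)}"

text \<open>beta^2 : the linear map determined by its values on the basis X_J
(coefficients with respect to that basis, which is linearly independent).\<close>
definition beta2 :: "nat \<Rightarrow> elt \<Rightarrow> elt" where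
  "beta2 n f = (let c = (SOME c. f = (\<lambda>w. \<Sum>J\<in>Pow {0..<n}. c J * X n J w)) in
     (\<lambda>v. \<Sum>J\<in>Pow {0..<n}. if 0 \<notin> J \<and> 1 \<notin> J then c J * X (n - 2) (shift2 J) v else 0))"

definition phi :: "elt \<Rightarrow> elt" where
  "phi f = (\<lambda>u. \<Sum>w\<in>{w \<in> signed_perms (length u). map abs w = u}. f w)"

definition Peak :: "int list \<Rightarrow> nat set" where
  "Peak u = {i \<in> {1..<length u}. wval u (i - 1) < wval u i \<and> wval u i > wval u (Suc i)}"

definition PeakO :: "int list \<Rightarrow> nat set" where
  "PeakO u = Peak u - {1}"

definition Fsets :: "nat \<Rightarrow> nat set set" where
  "Fsets m = {F. F \<subseteq> {1..<m} \<and> (\<forall>i\<in>F. Suc i \<notin> F)}"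

definition FsetsO :: "nat \<Rightarrow> nat set set" where
  "FsetsO m = {F \<in> Fsets m. 1 \<notin> F}"

definition P :: "nat \<Rightarrow> nat set \<Rightarrow> elt" where
  "P m F = (\<lambda>u. if u \<in> perms m \<and> Peak u = F then 1 else 0)"

definition PO :: "nat \<Rightarrow> nat set \<Rightarrow> elt" where
  "PO m F = (\<lambda>u. if u \<in> perms m \<and> PeakO u = F then 1 else 0)"

definition PeakAlg :: "nat \<Rightarrow> elt set" where
  "PeakAlg m = {f. \<exists>c. f = (\<lambda>u. \<Sum>F\<in>Fsets m. c F * P m F u)}"

definition PeakAlgO :: "nat \<Rightarrow> elt set" where
  "PeakAlgO m = {f. \<exists>c. f = (\<lambda>u. \<Sum>F\<in>FsetsO m. c F * PO m F u)}"

definition pimap :: "nat \<Rightarrow> elt \<Rightarrow> elt" where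
  "pimap n f = (let c = (SOME c. f = (\<lambda>u. \<Sum>F\<in>Fsets n. c F * P n F u)) in
     (\<lambda>v. \<Sum>F\<in>Fsets n.
        if 1 \<notin> F \<and> 2 \<notin> F then c F * P (n - 2) (shift2 F) v
        else if 1 \<in> F then - (c F * P (n - 2) (shift2 (F - {1})) v)
        else 0))"

end

theory Submission
  imports Defs
begin

lemma alt_sum:
  fixes K :: "nat set"
  assumes "finite K"
  shows "(\<Sum>J\<in>Pow K. if D \<subseteq> J then (-1::rat) ^ card (K - J) else 0) = (if D = K then 1 else 0)"
  using assms
proof (induction K arbitrary: D rule: finite_induct)
  case empty
  then show ?case by auto
next
  case (insert x K)
  have inj: "inj_on (insert x) (Pow K)"
    using insert.hyps(2) by (auto simp: inj_on_def)
  have disj: "Pow K \<inter> insert x ` Pow K = {}" using insert.hyps(2) by auto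
  have "(\<Sum>J\<in>Pow (insert x K). if D \<subseteq> J then (-1::rat) ^ card (insert x K - J) else 0)
     = (\<Sum>J\<in>Pow K. if D \<subseteq> J then (-1::rat) ^ card (insert x K - J) else 0)
     + (\<Sum>J\<in>insert x ` Pow K. if D \<subseteq> J then (-1::rat) ^ card (insert x K - J) else 0)"
    unfolding Pow_insert using insert.hyps(1) disj by (intro sum.union_disjoint) auto
  also have "(\<Sum>J\<in>insert x ` Pow K. if D \<subseteq> J then (-1::rat) ^ card (insert x K - J) else 0)
     = (\<Sum>J\<in>Pow K. if D \<subseteq> insert x J then (-1::rat) ^ card (K - J) else 0)"
  proof (subst sum.reindex[OF inj], intro sum.cong refl)
    fix J assume "J \<in> Pow K"
    then have "insert x K - insert x J = K - J" using insert.hyps(2) by auto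
    then show "((\<lambda>J. if D \<subseteq> J then (-1::rat) ^ card (insert x K - J) else 0) \<circ> insert x) J =
         (if D \<subseteq> insert x J then (-1) ^ card (K - J) else 0)" by simp
  qed
  also have "(\<Sum>J\<in>Pow K. if D \<subseteq> J then (-1::rat) ^ card (insert x K - J) else 0)
     = (\<Sum>J\<in>Pow K. if D \<subseteq> J then - ((-1::rat) ^ card (K - J)) else 0)"
  proof (intro sum.cong refl)
    fix J assume J: "J \<in> Pow K"
    have "insert x K - J = insert x (K - J)" using J insert.hyps(2) by auto
    moreover have "finite (K - J)" using insert.hyps(1) by auto
    moreover have "x \<notin> K - J" using insert.hyps(2) by auto
    ultimately have "card (insert x K - J) = Suc (card (K - J))" by simp
    then show "(if D \<subseteq> J then (-1::rat) ^ card (insert x K - J) else 0) = (if D \<subseteq> J then - ((-1::rat) ^ card (K - J)) else 0)" by simp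
  qed
  finally have eq: "(\<Sum>J\<in>Pow (insert x K). if D \<subseteq> J then (-1::rat) ^ card (insert x K - J) else 0)
     = (\<Sum>J\<in>Pow K. if D \<subseteq> J then - ((-1::rat) ^ card (K - J)) else 0) + (\<Sum>J\<in>Pow K. if D \<subseteq> insert x J then (-1::rat) ^ card (K - J) else 0)" .
  show ?case
  proof (cases "x \<in> D")
    case False
    then have "\<And>J. (D \<subseteq> insert x J) = (D \<subseteq> J)" by auto
    then have "(\<Sum>J\<in>Pow K. if D \<subseteq> J then - ((-1::rat) ^ card (K - J)) else 0) + (\<Sum>J\<in>Pow K. if D \<subseteq> insert x J then (-1::rat) ^ card (K - J) else 0) = 0"
      by (simp only: sum.distrib[symmetric]) (intro sum.neutral, auto)
    moreover have "D \<noteq> insert x K" using False by auto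
    ultimately show ?thesis using eq by simp
  next
    case True
    have z: "(\<Sum>J\<in>Pow K. if D \<subseteq> J then - ((-1::rat) ^ card (K - J)) else 0) = 0"
      using True insert.hyps(2) by (intro sum.neutral) auto
    have "\<And>J. J \<in> Pow K \<Longrightarrow> (D \<subseteq> insert x J) = (D - {x} \<subseteq> J)" by auto
    then have "(\<Sum>J\<in>Pow K. if D \<subseteq> insert x J then (-1::rat) ^ card (K - J) else 0)
        = (\<Sum>J\<in>Pow K. if D - {x} \<subseteq> J then (-1::rat) ^ card (K - J) else 0)"
      by (intro sum.cong) auto
    also have "\<dots> = (if D - {x} = K then 1 else 0)" by (rule insert.IH)
    also have "(D - {x} = K) = (D = insert x K)" using True insert.hyps(2) by auto
    finally show ?thesis using eq z by simp
  qed
qed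

lemma mobius_exists:
  fixes S :: "nat set" and g :: "nat set \<Rightarrow> rat"
  assumes fin: "finite S"
  shows "\<exists>c. \<forall>D\<subseteq>S. g D = (\<Sum>J\<in>Pow S. c J * (if D \<subseteq> J then 1 else 0))"
proof -
  define c where "c J = (\<Sum>K\<in>Pow S. if J \<subseteq> K then (-1::rat) ^ card (K - J) * g K else 0)" for J
  have "g D = (\<Sum>J\<in>Pow S. c J * (if D \<subseteq> J then 1 else 0))" if D: "D \<subseteq> S" for D
  proof -
    have "(\<Sum>J\<in>Pow S. c J * (if D \<subseteq> J then 1 else 0))
       = (\<Sum>J\<in>Pow S. \<Sum>K\<in>Pow S. if J \<subseteq> K \<and> D \<subseteq> J then (-1::rat) ^ card (K - J) * g K else 0)"
      unfolding c_def by (simp add: sum_distrib_right if_distrib if_distribR cong: if_cong) (intro sum.cong refl, auto)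
    also have "\<dots> = (\<Sum>K\<in>Pow S. \<Sum>J\<in>Pow S. if J \<subseteq> K \<and> D \<subseteq> J then (-1::rat) ^ card (K - J) * g K else 0)"
      by (rule sum.swap)
    also have "\<dots> = (\<Sum>K\<in>Pow S. g K * (\<Sum>J\<in>Pow K. if D \<subseteq> J then (-1::rat) ^ card (K - J) else 0))"
    proof (intro sum.cong refl)
      fix K assume K: "K \<in> Pow S"
      have "(\<Sum>J\<in>Pow S. if J \<subseteq> K \<and> D \<subseteq> J then (-1::rat) ^ card (K - J) * g K else 0)
          = (\<Sum>J\<in>Pow K. if J \<subseteq> K \<and> D \<subseteq> J then (-1::rat) ^ card (K - J) * g K else 0)"
        using K fin by (intro sum.mono_neutral_right) auto
      also have "\<dots> = g K * (\<Sum>J\<in>Pow K. if D \<subseteq> J then (-1::rat) ^ card (K - J) else 0)"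
        by (simp add: sum_distrib_left) (intro sum.cong refl, auto)
      finally show "(\<Sum>J\<in>Pow S. if J \<subseteq> K \<and> D \<subseteq> J then (-1::rat) ^ card (K - J) * g K else 0)
          = g K * (\<Sum>J\<in>Pow K. if D \<subseteq> J then (-1::rat) ^ card (K - J) else 0)" .
    qed
    also have "\<dots> = (\<Sum>K\<in>Pow S. if D = K then g K else 0)"
    proof (intro sum.cong refl)
      fix K assume "K \<in> Pow S"
      then have "finite K" using fin finite_subset by blast
      then show "g K * (\<Sum>J\<in>Pow K. if D \<subseteq> J then (-1::rat) ^ card (K - J) else 0) = (if D = K then g K else 0)"
        by (simp add: alt_sum)
    qed
    also have "\<dots> = g D" using D fin by (simp add: sum.delta)
    finally show ?thesis by simp
  qed
  then show ?thesis by blast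
qed

lemma finite_sp: "finite (signed_perms m)"
proof -
  have "signed_perms m \<subseteq> {w. set w \<subseteq> {-int m..int m} \<and> length w = m}"
  proof
    fix w assume w: "w \<in> signed_perms m"
    have "set w \<subseteq> {-int m..int m}"
    proof
      fix x assume "x \<in> set w"
      then have "abs x \<in> set (map abs w)" by simp
      then have "abs x \<in> {1..int m}" using w unfolding signed_perms_def by simp
      then show "x \<in> {-int m..int m}" by auto
    qed
    then show "w \<in> {w. set w \<subseteq> {-int m..int m} \<and> length w = m}" using w unfolding signed_perms_def by simp
  qed
  moreover have "finite {w. set w \<subseteq> {-int m..int m} \<and> length w = m}"
    by (rule finite_lists_length_eq) simp
  ultimately show ?thesis by (rule finite_subset)
qed

lemma Des_sub: "Des w \<subseteq> {0..<length w}"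
  unfolding Des_def by auto

lemma sp_length: "w \<in> signed_perms m \<Longrightarrow> length w = m"
  unfolding signed_perms_def by simp

definition wit :: "nat \<Rightarrow> nat set \<Rightarrow> int list" where
  "wit n J = map (\<lambda>i. if i \<in> J then -(int i + 1) else int i + 1) [0..<n]"

lemma wit_sp: "wit n J \<in> signed_perms n"
proof -
  have m: "map abs (wit n J) = map (\<lambda>i. int i + 1) [0..<n]"
    unfolding wit_def map_map by (intro map_cong) auto
  have d: "distinct (map (\<lambda>i. int i + 1) [0..<n])"
    by (simp add: distinct_map inj_on_def)
  have st: "set (map (\<lambda>i. int i + 1) [0..<n]) = {1..int n}"
  proof
    show "set (map (\<lambda>i. int i + 1) [0..<n]) \<subseteq> {1..int n}" by auto
    show "{1..int n} \<subseteq> set (map (\<lambda>i. int i + 1) [0..<n])"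
    proof
      fix x assume x: "x \<in> {1..int n}"
      then have a: "nat (x - 1) \<in> set [0..<n]" by (simp add: nat_less_iff)
      have b: "x = int (nat (x - 1)) + 1" using x by simp
      show "x \<in> set (map (\<lambda>i. int i + 1) [0..<n])"
        unfolding set_map using a b by (rule rev_image_eqI)
    qed
  qed
  have "length (wit n J) = n" by (simp add: wit_def)
  then show ?thesis unfolding signed_perms_def mem_Collect_eq m using d st by simp
qed

lemma Des_wit: "Des (wit n J) = J \<inter> {0..<n}"
proof -
  have "i \<in> Des (wit n J) \<longleftrightarrow> i \<in> J" if i: "i < n" for i
  proof (cases i)
    case 0
    then show ?thesis using i unfolding Des_def wval_def wit_def by auto
  next
    case (Suc k)
    then show ?thesis using i unfolding Des_def wval_def wit_def by auto
  qed
  moreover have "Des (wit n J) \<subseteq> {0..<n}" using Des_sub[of "wit n J"] by (simp add: wit_def)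
  ultimately show ?thesis by auto
qed

lemma sumX: "(\<Sum>J\<in>A. c J * X n J w) = (if w \<in> signed_perms n then (\<Sum>J\<in>A. c J * (if Des w \<subseteq> J then 1 else 0)) else 0)"
  unfolding X_def by auto

lemma X_indep:
  assumes "\<And>w. (\<Sum>J\<in>Pow {0..<n}. c J * X n J w) = 0"
  shows "\<forall>J\<in>Pow {0..<n}. c J = 0"
proof (rule ccontr)
  assume nt: "\<not> (\<forall>J\<in>Pow {0..<n}. c J = 0)"
  define Z where "Z = {J\<in>Pow {0..<n}. c J \<noteq> 0}"
  have Zne: "Z \<noteq> {}" and Zfin: "finite Z" using nt unfolding Z_def by auto
  have "Max (card ` Z) \<in> card ` Z" using Zne Zfin by (intro Max_in) auto
  then obtain J where JZ: "J \<in> Z" and JM: "card J = Max (card ` Z)" by auto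
  have Jmax: "card K \<le> card J" if "K \<in> Z" for K
    unfolding JM using Zfin that by (intro Max_ge) auto
  have Jsub: "J \<subseteq> {0..<n}" using JZ unfolding Z_def by auto
  let ?w = "wit n J"
  have DesJ: "Des ?w = J" using Des_wit[of n J] Jsub by auto
  have "0 = (\<Sum>K\<in>Pow {0..<n}. c K * X n K ?w)" using assms by simp
  also have "\<dots> = (\<Sum>K\<in>Pow {0..<n}. if K = J then c K else 0)"
  proof (intro sum.cong refl)
    fix K assume K: "K \<in> Pow {0..<n}"
    show "c K * X n K ?w = (if K = J then c K else 0)"
    proof (cases "J \<subseteq> K")
      case True
      show ?thesis
      proof (cases "K = J")
        case False
        with True have "J \<subset> K" by auto
        moreover have "finite K" using K finite_subset by auto
        ultimately have "card J < card K" by (simp add: psubset_card_mono)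
        then have "K \<notin> Z" using Jmax by force
        then have "c K = 0" using K unfolding Z_def by auto
        then show ?thesis using False by simp
      qed (simp add: X_def DesJ wit_sp)
    next
      case False
      then show ?thesis unfolding X_def DesJ by auto
    qed
  qed
  also have "\<dots> = c J" using Jsub by (simp add: sum.delta)
  finally show False using JZ unfolding Z_def by simp
qed

lemma X_unique:
  assumes "(\<lambda>w. \<Sum>J\<in>Pow {0..<n}. c J * X n J w) = (\<lambda>w. \<Sum>J\<in>Pow {0..<n}. d J * X n J w)"
  shows "\<forall>J\<in>Pow {0..<n}. c J = d J"
proof -
  have "\<And>w. (\<Sum>J\<in>Pow {0..<n}. (c J - d J) * X n J w) = 0"
  proof -
    fix w
    have "(\<Sum>J\<in>Pow {0..<n}. c J * X n J w) = (\<Sum>J\<in>Pow {0..<n}. d J * X n J w)" using assms by meson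
    then show "(\<Sum>J\<in>Pow {0..<n}. (c J - d J) * X n J w) = 0"
      by (simp add: left_diff_distrib sum_subtractf)
  qed
  from X_indep[where n=n and c="\<lambda>J. c J - d J", OF this] show ?thesis by simp
qed

lemma SigmaB_char:
  "SigmaB n = {f. \<exists>h. f = (\<lambda>w. if w \<in> signed_perms n then h (Des w) else 0)}"
proof (intro set_eqI iffI)
  fix f :: elt assume "f \<in> SigmaB n"
  then obtain c where c: "f = (\<lambda>w. \<Sum>J\<in>Pow {0..<n}. c J * X n J w)" unfolding SigmaB_def by auto
  show "f \<in> {f. \<exists>h. f = (\<lambda>w. if w \<in> signed_perms n then h (Des w) else 0)}"
    using c by (intro CollectI exI[of _ "\<lambda>D. \<Sum>J\<in>Pow {0..<n}. c J * (if D \<subseteq> J then 1 else 0)"]) (simp add: sumX)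
next
  fix f :: elt assume "f \<in> {f. \<exists>h. f = (\<lambda>w. if w \<in> signed_perms n then h (Des w) else 0)}"
  then obtain h :: "nat set \<Rightarrow> rat" where h: "f = (\<lambda>w. if w \<in> signed_perms n then h (Des w) else 0)" by auto
  obtain c where c: "\<forall>D\<subseteq>{0..<n}. h D = (\<Sum>J\<in>Pow {0..<n}. c J * (if D \<subseteq> J then 1 else 0))"
    using mobius_exists[of "{0..<n}" h] by auto
  have "f = (\<lambda>w. \<Sum>J\<in>Pow {0..<n}. c J * X n J w)"
  proof
    fix w show "f w = (\<Sum>J\<in>Pow {0..<n}. c J * X n J w)"
      unfolding sumX h using c Des_sub[of w] sp_length[of w n] by auto
  qed
  then show "f \<in> SigmaB n" unfolding SigmaB_def by auto
qed

lemma finite_Fsets: "finite (Fsets m)"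
proof -
  have "Fsets m \<subseteq> Pow {1..<m}" unfolding Fsets_def by auto
  then show ?thesis by (rule finite_subset) simp
qed

lemma finite_FsetsO: "finite (FsetsO m)"
  using finite_Fsets unfolding FsetsO_def by auto

lemma perms_length: "u \<in> perms m \<Longrightarrow> length u = m"
  unfolding perms_def by simp

lemma Peak_Fsets: "Peak u \<in> Fsets (length u)"
  unfolding Fsets_def Peak_def by auto

lemma PeakO_FsetsO: "PeakO u \<in> FsetsO (length u)"
  using Peak_Fsets[of u] unfolding FsetsO_def PeakO_def Fsets_def by auto

definition pv :: "nat set \<Rightarrow> nat \<Rightarrow> nat" where
  "pv F p = (if p \<in> F then p + 1 else if 1 \<le> p \<and> p - 1 \<in> F then p - 1 else p)"

definition pw :: "nat \<Rightarrow> nat set \<Rightarrow> int list" where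
  "pw n F = map (\<lambda>i. int (pv F (i + 1))) [0..<n]"

lemma pv_range: "F \<in> Fsets n \<Longrightarrow> p \<in> {1..n} \<Longrightarrow> pv F p \<in> {1..n}"
  unfolding pv_def Fsets_def by auto

lemma pv_invol: "F \<in> Fsets n \<Longrightarrow> p \<in> {1..n} \<Longrightarrow> pv F (pv F p) = p"
  unfolding pv_def Fsets_def by auto

lemma pw_perms: assumes F: "F \<in> Fsets n" shows "pw n F \<in> perms n"
proof -
  have inj: "inj_on (pv F) {1..n}"
    by (rule inj_on_inverseI[where g="pv F"]) (rule pv_invol[OF F])
  have img: "pv F ` {1..n} = {1..n}"
  proof
    show "pv F ` {1..n} \<subseteq> {1..n}" using pv_range[OF F] by auto
    show "{1..n} \<subseteq> pv F ` {1..n}"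
    proof
      fix p assume p: "p \<in> {1..n}"
      then have "p = pv F (pv F p)" using pv_invol[OF F p] by simp
      then show "p \<in> pv F ` {1..n}" by (rule rev_image_eqI[OF pv_range[OF F p]])
    qed
  qed
  have e: "map (\<lambda>i. int (pv F (i + 1))) [0..<n] = map (int \<circ> pv F) [Suc 0..<Suc n]"
    by (simp only: map_Suc_upt[symmetric] map_map) (simp add: comp_def)
  have su: "set [Suc 0..<Suc n] = {1..n}" by auto
  have d: "distinct (map (int \<circ> pv F) [Suc 0..<Suc n])"
  proof -
    have "inj_on (int \<circ> pv F) {1..n}"
      by (rule comp_inj_on[OF inj inj_on_of_nat])
    then show ?thesis unfolding distinct_map su by simp
  qed
  have s: "set (map (int \<circ> pv F) [Suc 0..<Suc n]) = {1..int n}"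
  proof -
    have "set (map (int \<circ> pv F) [Suc 0..<Suc n]) = int ` (pv F ` {1..n})"
      unfolding set_map su by (simp add: image_comp)
    also have "\<dots> = int ` {1..n}" using img by simp
    also have "\<dots> = {1..int n}"
    proof
      show "int ` {1..n} \<subseteq> {1..int n}" by auto
      show "{1..int n} \<subseteq> int ` {1..n}"
      proof
        fix x assume "x \<in> {1..int n}"
        then have a: "x = int (nat x)" and b: "nat x \<in> {1..n}" by auto
        from b a show "x \<in> int ` {1..n}" by (rule rev_image_eqI)
      qed
    qed
    finally show ?thesis .
  qed
  show ?thesis unfolding perms_def pw_def e using d s by simp
qed

lemma wval_pw: "1 \<le> p \<Longrightarrow> p \<le> n \<Longrightarrow> wval (pw n F) p = int (pv F p)"
  unfolding wval_def pw_def by auto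

lemma wval_0: "wval u 0 = 0"
  unfolding wval_def by simp

lemma Peak_pw: assumes F: "F \<in> Fsets n" shows "Peak (pw n F) = F"
proof -
  have len: "length (pw n F) = n" unfolding pw_def by simp
  have Fs: "F \<subseteq> {1..<n}" and nc: "\<And>i. i \<in> F \<Longrightarrow> Suc i \<notin> F" using F unfolding Fsets_def by auto
  have "p \<in> Peak (pw n F) \<longleftrightarrow> p \<in> F" if p: "p \<in> {1..<n}" for p
  proof -
    have w1: "wval (pw n F) p = int (pv F p)" using p by (intro wval_pw) auto
    have w2: "wval (pw n F) (Suc p) = int (pv F (Suc p))" using p by (intro wval_pw) auto
    have w0: "wval (pw n F) (p - 1) = (if p = 1 then 0 else int (pv F (p - 1)))"
      using p wval_0[of "pw n F"] wval_pw[of "p - 1" n F] by auto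
    show ?thesis
    proof (cases "p \<in> F")
      case True
      then have a: "pv F p = p + 1" unfolding pv_def by simp
      have b: "pv F (Suc p) = p" using True nc[OF True] unfolding pv_def by simp
      have c: "p \<noteq> 1 \<Longrightarrow> pv F (p - 1) \<le> p" using p Fs unfolding pv_def by auto
      show ?thesis using True p a b c w0 w1 w2 unfolding Peak_def len by auto
    next
      case False
      show ?thesis
      proof (cases "p - 1 \<in> F \<and> p \<noteq> 1")
        case True
        then have "pv F p = p - 1" "pv F (p - 1) = p" using False p unfolding pv_def by auto
        then show ?thesis using True False p w0 w1 unfolding Peak_def len by auto
      next
        case nF: False
        then have a: "pv F p = p" using False p Fs unfolding pv_def by auto
        have "pv F (Suc p) \<ge> Suc p" using False unfolding pv_def by auto
        then show ?thesis using False p a w1 w2 unfolding Peak_def len by auto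
      qed
    qed
  qed
  moreover have "Peak (pw n F) \<subseteq> {1..<n}" "F \<subseteq> {1..<n}" using Peak_Fsets[of "pw n F"] Fs len unfolding Fsets_def by auto
  ultimately show ?thesis by blast
qed

lemma sumP: "(\<Sum>F\<in>Fsets n. c F * P n F u) = (if u \<in> perms n then c (Peak u) else 0)"
proof (cases "u \<in> perms n")
  case True
  then have "Peak u \<in> Fsets n" using Peak_Fsets[of u] perms_length by metis
  then show ?thesis using True finite_Fsets unfolding P_def
    by (simp add: if_distrib[where f="\<lambda>x. c _ * x"] cong: if_cong)
next
  case False
  then show ?thesis unfolding P_def by simp
qed

lemma sumPO: "(\<Sum>F\<in>FsetsO n. c F * PO n F u) = (if u \<in> perms n then c (PeakO u) else 0)"
proof (cases "u \<in> perms n")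
  case True
  then have "PeakO u \<in> FsetsO n" using PeakO_FsetsO[of u] perms_length by metis
  then show ?thesis using True finite_FsetsO unfolding PO_def
    by (simp add: if_distrib[where f="\<lambda>x. c _ * x"] cong: if_cong)
next
  case False
  then show ?thesis unfolding PO_def by simp
qed

lemma PeakAlg_char: "PeakAlg n = {g. \<exists>a. g = (\<lambda>u. if u \<in> perms n then a (Peak u) else 0)}"
  unfolding PeakAlg_def sumP by simp

lemma PeakAlgO_char: "PeakAlgO n = {g. \<exists>a. g = (\<lambda>u. if u \<in> perms n then a (PeakO u) else 0)}"
  unfolding PeakAlgO_def sumPO by simp

definition up2 :: "nat set \<Rightarrow> nat set" where
  "up2 G = (\<lambda>i. i + 2) ` G"

lemma shift2_up2: "shift2 (up2 G) = G"
  unfolding shift2_def up2_def by (simp add: image_image)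

lemma up2_shift2: assumes "\<forall>j\<in>F. 3 \<le> j" shows "up2 (shift2 F) = F"
proof -
  have "up2 (shift2 F) = (\<lambda>j. j - 2 + 2) ` F" unfolding shift2_def up2_def by (simp add: image_image)
  also have "\<dots> = (\<lambda>j. j) ` F" using assms by (intro image_cong) auto
  finally show ?thesis by simp
qed

lemma up2_mem: "x \<in> up2 G \<longleftrightarrow> 2 \<le> x \<and> x - 2 \<in> G"
  unfolding up2_def by force

lemma Peak_0: "0 \<notin> Peak v"
  unfolding Peak_def by auto

lemma up2_Fsets: assumes G: "G \<in> Fsets (n - 2)" and n: "2 \<le> n"
  shows "up2 G \<in> Fsets n" "insert 1 (up2 G) \<in> Fsets n"
  using G n unfolding Fsets_def up2_def by (auto simp: subset_iff)

lemma Fsets_one: assumes F: "F \<in> Fsets n" and "1 \<in> F" and n: "2 \<le> n"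
  shows "shift2 (F - {1}) \<in> Fsets (n - 2)" "up2 (shift2 (F - {1})) = F - {1}" "2 \<notin> F"
proof -
  have nc: "\<And>i. i \<in> F \<Longrightarrow> Suc i \<notin> F" and Fs: "F \<subseteq> {1..<n}" using F unfolding Fsets_def by auto
  show two: "2 \<notin> F" using nc[OF \<open>1 \<in> F\<close>] by (simp add: numeral_2_eq_2)
  have ge3: "\<forall>j\<in>F - {1}. 3 \<le> j"
  proof
    fix j assume j: "j \<in> F - {1}"
    then have "1 \<le> j" "j \<noteq> 1" "j \<noteq> 2" using Fs two by auto
    then show "3 \<le> j" by linarith
  qed
  show "up2 (shift2 (F - {1})) = F - {1}" by (rule up2_shift2[OF ge3])
  show "shift2 (F - {1}) \<in> Fsets (n - 2)"
  proof -
    have "shift2 (F - {1}) \<subseteq> {1..<n - 2}"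
    proof
      fix x assume "x \<in> shift2 (F - {1})"
      then obtain j where j: "j \<in> F - {1}" "x = j - 2" unfolding shift2_def by auto
      then have "3 \<le> j" "j < n" using ge3 Fs by auto
      then show "x \<in> {1..<n - 2}" using j by auto
    qed
    moreover have "\<forall>i\<in>shift2 (F - {1}). Suc i \<notin> shift2 (F - {1})"
    proof
      fix i assume "i \<in> shift2 (F - {1})"
      then obtain j where j: "j \<in> F - {1}" "i = j - 2" unfolding shift2_def by auto
      show "Suc i \<notin> shift2 (F - {1})"
      proof
        assume "Suc i \<in> shift2 (F - {1})"
        then obtain k where k: "k \<in> F - {1}" "Suc i = k - 2" unfolding shift2_def by auto
        have "3 \<le> j" "3 \<le> k" using j k ge3 by auto
        then have "k = Suc j" using j(2) k(2) by arith
        then show False using nc j k by auto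
      qed
    qed
    ultimately show ?thesis unfolding Fsets_def by auto
  qed
qed

lemma Fsets_noone: assumes F: "F \<in> Fsets n" and "1 \<notin> F" "2 \<notin> F"
  shows "up2 (shift2 F) = F"
proof -
  have Fs: "F \<subseteq> {1..<n}" using F unfolding Fsets_def by auto
  have "\<forall>j\<in>F. 3 \<le> j"
  proof
    fix j assume j: "j \<in> F"
    then have "1 \<le> j" "j \<noteq> 1" "j \<noteq> 2" using Fs assms(2,3) by auto
    then show "3 \<le> j" by linarith
  qed
  then show ?thesis by (rule up2_shift2)
qed

lemma P_coeff:
  assumes "(\<lambda>u. \<Sum>F\<in>Fsets n. c F * P n F u) = (\<lambda>u. if u \<in> perms n then a (Peak u) else 0)"
  shows "\<forall>F\<in>Fsets n. c F = a F"
proof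
  fix F assume F: "F \<in> Fsets n"
  have "(\<Sum>K\<in>Fsets n. c K * P n K (pw n F)) = (if pw n F \<in> perms n then a (Peak (pw n F)) else 0)"
    using fun_cong[OF assms, of "pw n F"] by simp
  then show "c F = a F" unfolding sumP using pw_perms[OF F] Peak_pw[OF F] by simp
qed

lemma pimap_formula:
  assumes n: "2 \<le> n" and g: "g = (\<lambda>u. if u \<in> perms n then a (Peak u) else 0)"
  shows "pimap n g = (\<lambda>v. if v \<in> perms (n - 2) then a (up2 (Peak v)) - a (insert 1 (up2 (Peak v))) else 0)"
proof -
  define c where "c = (SOME c. g = (\<lambda>u. \<Sum>F\<in>Fsets n. c F * P n F u))"
  have ex: "\<exists>c. g = (\<lambda>u. \<Sum>F\<in>Fsets n. c F * P n F u)"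
    using g by (intro exI[of _ a]) (simp add: sumP)
  have cg: "g = (\<lambda>u. \<Sum>F\<in>Fsets n. c F * P n F u)"
    unfolding c_def by (rule someI_ex[OF ex])
  have ca: "\<forall>F\<in>Fsets n. c F = a F"
    by (rule P_coeff) (use cg g in simp)
  have pm: "pimap n g = (\<lambda>v. \<Sum>F\<in>Fsets n.
        if 1 \<notin> F \<and> 2 \<notin> F then c F * P (n - 2) (shift2 F) v
        else if 1 \<in> F then - (c F * P (n - 2) (shift2 (F - {1})) v)
        else 0)"
    unfolding pimap_def Let_def c_def by simp
  show ?thesis
  proof
    fix v
    show "pimap n g v = (if v \<in> perms (n - 2) then a (up2 (Peak v)) - a (insert 1 (up2 (Peak v))) else 0)"
    proof (cases "v \<in> perms (n - 2)")
      case False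
      have "P (n - 2) H v = 0" for H unfolding P_def using False by simp
      then have "pimap n g v = 0" unfolding pm by (intro sum.neutral) simp
      then show ?thesis using False by simp
    next
      case True
      define G where "G = Peak v"
      have G: "G \<in> Fsets (n - 2)" unfolding G_def using Peak_Fsets[of v] perms_length[OF True] by simp
      have G0: "0 \<notin> G" unfolding G_def by (rule Peak_0)
      have u1: "1 \<notin> up2 G" "2 \<notin> up2 G" using G0 unfolding up2_mem by auto
      have F1: "up2 G \<in> Fsets n" and F2: "insert 1 (up2 G) \<in> Fsets n" using up2_Fsets[OF G n] by auto
      have ne: "up2 G \<noteq> insert 1 (up2 G)" using u1 by auto
      have trm: "(if 1 \<notin> F \<and> 2 \<notin> F then c F * P (n - 2) (shift2 F) v
        else if 1 \<in> F then - (c F * P (n - 2) (shift2 (F - {1})) v)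
        else 0) = (if F = up2 G then a (up2 G) else 0) - (if F = insert 1 (up2 G) then a (insert 1 (up2 G)) else 0)"
        if F: "F \<in> Fsets n" for F
      proof -
        have cF: "c F = a F" using ca F by auto
        have PV: "P (n - 2) H v = (if Peak v = H then 1 else 0)" for H
          unfolding P_def using \<open>v \<in> perms (n - 2)\<close> by simp
        show ?thesis
        proof (cases "1 \<notin> F \<and> 2 \<notin> F")
          case True
          have e: "up2 (shift2 F) = F" using Fsets_noone[OF F] True by auto
          have eq: "(Peak v = shift2 F) = (F = up2 G)" unfolding G_def[symmetric] using e shift2_up2[of G] by auto
          have ne2: "F \<noteq> insert 1 (up2 G)" using True by auto
          show ?thesis unfolding PV eq using True ne2 cF by simp
        next
          case False
          show ?thesis
          proof (cases "1 \<in> F")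
            case True
            note o = Fsets_one[OF F True n]
            have eq: "(Peak v = shift2 (F - {1})) = (F = insert 1 (up2 G))"
              unfolding G_def[symmetric]
            proof
              assume "G = shift2 (F - {1})"
              then have "up2 G = F - {1}" using o(2) by simp
              then show "F = insert 1 (up2 G)" using True by auto
            next
              assume "F = insert 1 (up2 G)"
              then have "F - {1} = up2 G" using u1 by auto
              then show "G = shift2 (F - {1})" by (simp add: shift2_up2)
            qed
            have ne2: "F \<noteq> up2 G" using True u1 by auto
            show ?thesis unfolding PV eq using True ne2 cF by simp
          next
            case no1: False
            then have two: "2 \<in> F" using False by auto
            then have "F \<noteq> up2 G" "F \<noteq> insert 1 (up2 G)" using u1 no1 by auto
            then show ?thesis using no1 two by simp
          qed
        qed
      qed
      have "pimap n g v = (\<Sum>F\<in>Fsets n. (if F = up2 G then a (up2 G) else 0) - (if F = insert 1 (up2 G) then a (insert 1 (up2 G)) else 0))"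
        unfolding pm using trm by (intro sum.cong) auto
      also have "\<dots> = a (up2 G) - a (insert 1 (up2 G))"
        unfolding sum_subtractf using F1 F2 finite_Fsets by (simp add: sum.delta)
      finally show ?thesis using True unfolding G_def by simp
    qed
  qed
qed

lemma PeakAlgO_sub: "PeakAlgO n \<subseteq> PeakAlg n"
proof
  fix g :: elt assume "g \<in> PeakAlgO n"
  then obtain c :: "nat set \<Rightarrow> rat" where g: "g = (\<lambda>u. if u \<in> perms n then c (PeakO u) else 0)"
    unfolding PeakAlgO_char by auto
  then have "g = (\<lambda>u. if u \<in> perms n then (\<lambda>F. c (F - {1})) (Peak u) else 0)"
    unfolding PeakO_def by simp
  then show "g \<in> PeakAlg n" unfolding PeakAlg_char by (intro CollectI exI[of _ "\<lambda>F. c (F - {1})"])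
qed

lemma pimap_image: assumes n: "2 \<le> n" shows "pimap n ` PeakAlg n = PeakAlg (n - 2)"
proof
  show "pimap n ` PeakAlg n \<subseteq> PeakAlg (n - 2)"
  proof
    fix h assume "h \<in> pimap n ` PeakAlg n"
    then obtain g where g: "g \<in> PeakAlg n" and h: "h = pimap n g" by auto
    from g obtain a :: "nat set \<Rightarrow> rat" where ga: "g = (\<lambda>u. if u \<in> perms n then a (Peak u) else 0)"
      unfolding PeakAlg_char by auto
    have "h = (\<lambda>v. if v \<in> perms (n - 2) then (\<lambda>G. a (up2 G) - a (insert 1 (up2 G))) (Peak v) else 0)"
      unfolding h pimap_formula[OF n ga] by simp
    then show "h \<in> PeakAlg (n - 2)" unfolding PeakAlg_char by (intro CollectI exI[of _ "\<lambda>G. a (up2 G) - a (insert 1 (up2 G))"])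
  qed
next
  show "PeakAlg (n - 2) \<subseteq> pimap n ` PeakAlg n"
  proof
    fix h :: elt assume "h \<in> PeakAlg (n - 2)"
    then obtain b :: "nat set \<Rightarrow> rat" where hb: "h = (\<lambda>v. if v \<in> perms (n - 2) then b (Peak v) else 0)"
      unfolding PeakAlg_char by auto
    define a where "a F = (if 1 \<notin> F \<and> 2 \<notin> F then b (shift2 F) else 0)" for F
    define g where "g = (\<lambda>u. if u \<in> perms n then a (Peak u) else 0)"
    have "g \<in> PeakAlg n" unfolding PeakAlg_char g_def by blast
    moreover have "pimap n g = h"
    proof
      fix v
      have "1 \<notin> up2 (Peak v)" "2 \<notin> up2 (Peak v)" using Peak_0[of v] unfolding up2_mem by auto
      then show "pimap n g v = h v"
        unfolding pimap_formula[OF n g_def] hb a_def by (simp add: shift2_up2)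
    qed
    ultimately show "h \<in> pimap n ` PeakAlg n" by blast
  qed
qed

lemma pimap_kernel: assumes n: "2 \<le> n" shows "{f \<in> PeakAlg n. pimap n f = (\<lambda>_. 0)} = PeakAlgO n"
proof
  show "{f \<in> PeakAlg n. pimap n f = (\<lambda>_. 0)} \<subseteq> PeakAlgO n"
  proof
    fix f assume "f \<in> {f \<in> PeakAlg n. pimap n f = (\<lambda>_. 0)}"
    then have f: "f \<in> PeakAlg n" and z: "pimap n f = (\<lambda>_. 0)" by auto
    from f obtain a :: "nat set \<Rightarrow> rat" where fa: "f = (\<lambda>u. if u \<in> perms n then a (Peak u) else 0)"
      unfolding PeakAlg_char by auto
    have aeq: "a (up2 G) = a (insert 1 (up2 G))" if G: "G \<in> Fsets (n - 2)" for G
    proof -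
      have "pimap n f (pw (n - 2) G) = 0" using z by simp
      then show ?thesis unfolding pimap_formula[OF n fa] using pw_perms[OF G] Peak_pw[OF G] by simp
    qed
    have "a (Peak u) = a (PeakO u)" if u: "u \<in> perms n" for u
    proof (cases "1 \<in> Peak u")
      case False
      then show ?thesis unfolding PeakO_def by simp
    next
      case True
      have F: "Peak u \<in> Fsets n" using Peak_Fsets[of u] perms_length[OF u] by simp
      note o = Fsets_one[OF F True n]
      have "a (up2 (shift2 (Peak u - {1}))) = a (insert 1 (up2 (shift2 (Peak u - {1}))))"
        by (rule aeq[OF o(1)])
      then show ?thesis unfolding o(2) PeakO_def using True by (simp add: insert_absorb)
    qed
    then have "f = (\<lambda>u. if u \<in> perms n then a (PeakO u) else 0)" unfolding fa by auto
    then show "f \<in> PeakAlgO n" unfolding PeakAlgO_char by (intro CollectI exI[of _ a])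
  qed
next
  show "PeakAlgO n \<subseteq> {f \<in> PeakAlg n. pimap n f = (\<lambda>_. 0)}"
  proof
    fix f assume fO: "f \<in> PeakAlgO n"
    then obtain c :: "nat set \<Rightarrow> rat" where fc: "f = (\<lambda>u. if u \<in> perms n then c (PeakO u) else 0)"
      unfolding PeakAlgO_char by auto
    then have fa: "f = (\<lambda>u. if u \<in> perms n then (\<lambda>F. c (F - {1})) (Peak u) else 0)"
      unfolding PeakO_def by simp
    have "pimap n f = (\<lambda>_. 0)"
    proof
      fix v
      have "1 \<notin> up2 (Peak v)" using Peak_0[of v] unfolding up2_mem by auto
      then show "pimap n f v = 0" unfolding pimap_formula[OF n fa] by simp
    qed
    then show "f \<in> {f \<in> PeakAlg n. pimap n f = (\<lambda>_. 0)}" using fO PeakAlgO_sub by auto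
  qed
qed

lemma up2_shift2': assumes "\<forall>j\<in>F. 2 \<le> j" shows "up2 (shift2 F) = F"
proof -
  have "up2 (shift2 F) = (\<lambda>j. j - 2 + 2) ` F" unfolding shift2_def up2_def by (simp add: image_image)
  also have "\<dots> = (\<lambda>j. j) ` F" using assms by (intro image_cong) auto
  finally show ?thesis by simp
qed

lemma up2_Pow: assumes n: "2 \<le> n"
  shows "up2 ` Pow {0..<n - 2} = {J \<in> Pow {0..<n}. 0 \<notin> J \<and> 1 \<notin> J}"
proof
  show "up2 ` Pow {0..<n - 2} \<subseteq> {J \<in> Pow {0..<n}. 0 \<notin> J \<and> 1 \<notin> J}"
    using n unfolding up2_def by auto
  show "{J \<in> Pow {0..<n}. 0 \<notin> J \<and> 1 \<notin> J} \<subseteq> up2 ` Pow {0..<n - 2}"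
  proof
    fix J assume J: "J \<in> {J \<in> Pow {0..<n}. 0 \<notin> J \<and> 1 \<notin> J}"
    have J0: "0 \<notin> J" and J1: "1 \<notin> J" and Jn: "J \<subseteq> {0..<n}" using J by auto
    have ge2: "\<forall>j\<in>J. 2 \<le> j"
    proof
      fix j assume "j \<in> J"
      then have "j \<noteq> 0" "j \<noteq> 1" using J0 J1 by (metis, metis)
      then show "2 \<le> j" by linarith
    qed
    have "shift2 J \<in> Pow {0..<n - 2}"
    proof -
      have "shift2 J \<subseteq> {0..<n - 2}"
      proof
        fix x assume "x \<in> shift2 J"
        then obtain j where j: "j \<in> J" "x = j - 2" unfolding shift2_def by auto
        then have "2 \<le> j" "j < n" using ge2 Jn by auto
        then show "x \<in> {0..<n - 2}" using j by auto
      qed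
      then show ?thesis by simp
    qed
    moreover have "J = up2 (shift2 J)" using up2_shift2'[OF ge2] by simp
    ultimately show "J \<in> up2 ` Pow {0..<n - 2}" by (rule rev_image_eqI)
  qed
qed

lemma reindex01: assumes n: "2 \<le> n"
  shows "(\<Sum>J\<in>Pow {0..<n}. if 0 \<notin> J \<and> 1 \<notin> J then \<psi> J else (0::rat)) = (\<Sum>K\<in>Pow {0..<n - 2}. \<psi> (up2 K))"
proof -
  have "(\<Sum>J\<in>Pow {0..<n}. if 0 \<notin> J \<and> 1 \<notin> J then \<psi> J else (0::rat)) = (\<Sum>J\<in>{J \<in> Pow {0..<n}. 0 \<notin> J \<and> 1 \<notin> J}. \<psi> J)"
    by (rule sum.inter_filter[symmetric]) simp
  also have "\<dots> = (\<Sum>J\<in>up2 ` Pow {0..<n - 2}. \<psi> J)" using up2_Pow[OF n] by simp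
  also have "\<dots> = (\<Sum>K\<in>Pow {0..<n - 2}. \<psi> (up2 K))"
  proof (rule sum.reindex[unfolded comp_def])
    show "inj_on up2 (Pow {0..<n - 2})"
      by (rule inj_on_inverseI[where g=shift2]) (rule shift2_up2)
  qed
  finally show ?thesis .
qed

lemma I01_alt: "(\<Sum>J\<in>{J\<in>Pow {0..<n}. 0 \<in> J \<or> 1 \<in> J}. c J * X n J w)
   = (\<Sum>J\<in>Pow {0..<n}. (if 0 \<in> J \<or> 1 \<in> J then c J else 0) * X n J w)"
  by (rule trans[OF sum.inter_filter]) (simp, intro sum.cong, auto)

lemma I01_sub: "I01 n \<subseteq> SigmaB n"
proof
  fix f assume "f \<in> I01 n"
  then obtain c where "f = (\<lambda>w. \<Sum>J\<in>{J\<in>Pow {0..<n}. 0 \<in> J \<or> 1 \<in> J}. c J * X n J w)"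
    unfolding I01_def by auto
  then have "f = (\<lambda>w. \<Sum>J\<in>Pow {0..<n}. (if 0 \<in> J \<or> 1 \<in> J then c J else 0) * X n J w)"
    unfolding I01_alt by simp
  then show "f \<in> SigmaB n" unfolding SigmaB_def by (intro CollectI exI[of _ "\<lambda>J. if 0 \<in> J \<or> 1 \<in> J then c J else 0"])
qed

lemma beta2_formula:
  assumes f: "f = (\<lambda>w. \<Sum>J\<in>Pow {0..<n}. c J * X n J w)"
  shows "beta2 n f = (\<lambda>v. \<Sum>J\<in>Pow {0..<n}. if 0 \<notin> J \<and> 1 \<notin> J then c J * X (n - 2) (shift2 J) v else 0)"
proof -
  define c' where "c' = (SOME c. f = (\<lambda>w. \<Sum>J\<in>Pow {0..<n}. c J * X n J w))"
  have ex: "\<exists>c. f = (\<lambda>w. \<Sum>J\<in>Pow {0..<n}. c J * X n J w)" using f by (intro exI[of _ c])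
  have "f = (\<lambda>w. \<Sum>J\<in>Pow {0..<n}. c' J * X n J w)"
    unfolding c'_def by (rule someI_ex[OF ex])
  then have "(\<lambda>w. \<Sum>J\<in>Pow {0..<n}. c' J * X n J w) = (\<lambda>w. \<Sum>J\<in>Pow {0..<n}. c J * X n J w)"
    using f by simp
  then have cc: "\<forall>J\<in>Pow {0..<n}. c' J = c J" by (rule X_unique)
  have "beta2 n f = (\<lambda>v. \<Sum>J\<in>Pow {0..<n}. if 0 \<notin> J \<and> 1 \<notin> J then c' J * X (n - 2) (shift2 J) v else 0)"
    unfolding beta2_def Let_def c'_def by (rule refl)
  also have "\<dots> = (\<lambda>v. \<Sum>J\<in>Pow {0..<n}. if 0 \<notin> J \<and> 1 \<notin> J then c J * X (n - 2) (shift2 J) v else 0)"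
    using cc by (intro ext sum.cong) auto
  finally show ?thesis .
qed

lemma beta2_formula2:
  assumes n: "2 \<le> n" and f: "f = (\<lambda>w. \<Sum>J\<in>Pow {0..<n}. c J * X n J w)"
  shows "beta2 n f = (\<lambda>v. \<Sum>K\<in>Pow {0..<n - 2}. c (up2 K) * X (n - 2) K v)"
  unfolding beta2_formula[OF f] reindex01[OF n] shift2_up2 ..

lemma beta2_image: assumes n: "2 \<le> n" shows "beta2 n ` SigmaB n = SigmaB (n - 2)"
proof
  show "beta2 n ` SigmaB n \<subseteq> SigmaB (n - 2)"
  proof
    fix g assume "g \<in> beta2 n ` SigmaB n"
    then obtain f where f: "f \<in> SigmaB n" and g: "g = beta2 n f" by auto
    from f obtain c where fc: "f = (\<lambda>w. \<Sum>J\<in>Pow {0..<n}. c J * X n J w)" unfolding SigmaB_def by auto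
    show "g \<in> SigmaB (n - 2)" unfolding g beta2_formula2[OF n fc] SigmaB_def
      by (intro CollectI exI[of _ "\<lambda>K. c (up2 K)"]) simp
  qed
  show "SigmaB (n - 2) \<subseteq> beta2 n ` SigmaB n"
  proof
    fix g assume "g \<in> SigmaB (n - 2)"
    then obtain d where gd: "g = (\<lambda>w. \<Sum>K\<in>Pow {0..<n - 2}. d K * X (n - 2) K w)" unfolding SigmaB_def by auto
    define f where "f = (\<lambda>w. \<Sum>J\<in>Pow {0..<n}. d (shift2 J) * X n J w)"
    have "f \<in> SigmaB n" unfolding f_def SigmaB_def by (intro CollectI exI[of _ "\<lambda>J. d (shift2 J)"]) (rule refl)
    moreover have "beta2 n f = g" unfolding beta2_formula2[OF n f_def] gd shift2_up2 ..
    ultimately show "g \<in> beta2 n ` SigmaB n" by blast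
  qed
qed

lemma beta2_kernel: assumes n: "2 \<le> n" shows "{f \<in> SigmaB n. beta2 n f = (\<lambda>_. 0)} = I01 n"
proof
  show "{f \<in> SigmaB n. beta2 n f = (\<lambda>_. 0)} \<subseteq> I01 n"
  proof
    fix f assume "f \<in> {f \<in> SigmaB n. beta2 n f = (\<lambda>_. 0)}"
    then have f: "f \<in> SigmaB n" and z: "beta2 n f = (\<lambda>_. 0)" by auto
    from f obtain c where fc: "f = (\<lambda>w. \<Sum>J\<in>Pow {0..<n}. c J * X n J w)" unfolding SigmaB_def by auto
    have "(\<lambda>v. \<Sum>K\<in>Pow {0..<n - 2}. c (up2 K) * X (n - 2) K v) = (\<lambda>v. \<Sum>K\<in>Pow {0..<n - 2}. 0 * X (n - 2) K v)"
      using z unfolding beta2_formula2[OF n fc] by simp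
    from X_unique[where c="\<lambda>K. c (up2 K)" and d="\<lambda>K. 0" and n="n - 2", OF this]
    have c0: "\<forall>K\<in>Pow {0..<n - 2}. c (up2 K) = 0" by simp
    have "f = (\<lambda>w. \<Sum>J\<in>Pow {0..<n}. (if 0 \<in> J \<or> 1 \<in> J then c J else 0) * X n J w)"
      unfolding fc
    proof (intro ext sum.cong refl)
      fix w J assume J: "J \<in> Pow {0..<n}"
      show "c J * X n J w = (if 0 \<in> J \<or> 1 \<in> J then c J else 0) * X n J w"
      proof (cases "0 \<in> J \<or> 1 \<in> J")
        case False
        then have "J \<in> up2 ` Pow {0..<n - 2}" using up2_Pow[OF n] J by auto
        then have "c J = 0" using c0 by auto
        then show ?thesis by simp
      qed simp
    qed
    then show "f \<in> I01 n" unfolding I01_def I01_alt[symmetric] by blast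
  qed
  show "I01 n \<subseteq> {f \<in> SigmaB n. beta2 n f = (\<lambda>_. 0)}"
  proof
    fix f assume fI: "f \<in> I01 n"
    then obtain c where "f = (\<lambda>w. \<Sum>J\<in>{J\<in>Pow {0..<n}. 0 \<in> J \<or> 1 \<in> J}. c J * X n J w)"
      unfolding I01_def by auto
    then have fc: "f = (\<lambda>w. \<Sum>J\<in>Pow {0..<n}. (if 0 \<in> J \<or> 1 \<in> J then c J else 0) * X n J w)"
      unfolding I01_alt by simp
    have "beta2 n f = (\<lambda>_. 0)" unfolding beta2_formula[OF fc] by (intro ext sum.neutral) auto
    then show "f \<in> {f \<in> SigmaB n. beta2 n f = (\<lambda>_. 0)}" using fI I01_sub by auto
  qed
qed

definition lifts :: "int list \<Rightarrow> int list set" where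
  "lifts u = {w \<in> signed_perms (length u). map abs w = u}"

lemma phi_lifts: "phi f u = (\<Sum>w\<in>lifts u. f w)"
  unfolding phi_def lifts_def by simp

lemma finite_lifts: "finite (lifts u)"
  unfolding lifts_def using finite_sp by simp

lemma perm_entry: assumes "u \<in> perms n" "i < n" shows "1 \<le> u ! i" "u ! i \<le> int n"
proof -
  have "u ! i \<in> set u" using assms perms_length by (metis nth_mem)
  then have "u ! i \<in> {1..int n}" using assms(1) unfolding perms_def by auto
  then show "1 \<le> u ! i" "u ! i \<le> int n" by auto
qed

lemma lift_perm: assumes "w \<in> signed_perms n" "map abs w = u" shows "u \<in> perms n"
  using assms unfolding signed_perms_def perms_def by auto

lemma lifts_char: assumes u: "u \<in> perms n"
  shows "w \<in> lifts u \<longleftrightarrow> length w = n \<and> (\<forall>i<n. w ! i = u ! i \<or> w ! i = - (u ! i))"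
proof
  assume w: "w \<in> lifts u"
  then have l: "length w = n" and m: "map abs w = u" using perms_length[OF u]
    unfolding lifts_def signed_perms_def by auto
  have "w ! i = u ! i \<or> w ! i = - (u ! i)" if "i < n" for i
  proof -
    have "map abs w ! i = u ! i" using m by simp
    then have "abs (w ! i) = u ! i" using that l by simp
    then show ?thesis by (cases "w ! i \<ge> 0") auto
  qed
  then show "length w = n \<and> (\<forall>i<n. w ! i = u ! i \<or> w ! i = - (u ! i))" using l by auto
next
  assume a: "length w = n \<and> (\<forall>i<n. w ! i = u ! i \<or> w ! i = - (u ! i))"
  have lu: "length u = n" using perms_length[OF u] .
  have "map abs w = u"
  proof (rule nth_equalityI)
    show "length (map abs w) = length u" using a lu by simp
    fix i assume "i < length (map abs w)"
    then have i: "i < n" using a by simp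
    have "1 \<le> u ! i" using perm_entry[OF u i] by simp
    then show "map abs w ! i = u ! i" using a i by auto
  qed
  then have s1: "set (map abs w) = {1..int n}" and s2: "distinct (map abs w)" using u unfolding perms_def by simp_all
  have "w \<in> signed_perms n" unfolding signed_perms_def using s1 s2 a by blast
  then show "w \<in> lifts u" unfolding lifts_def using \<open>map abs w = u\<close> lu by simp
qed

lemma Des_perm_0: assumes "u \<in> perms n" shows "0 \<notin> Des u"
proof (cases "n = 0")
  case True
  then show ?thesis using perms_length[OF assms] unfolding Des_def by simp
next
  case False
  then have "1 \<le> u ! 0" using perm_entry[OF assms] by simp
  then show ?thesis unfolding Des_def wval_def by simp
qed

lemma Des_lift:
  assumes u: "u \<in> perms n" and w: "w \<in> lifts u" and j: "j < n"
  shows "j \<in> Des w \<longleftrightarrow> (if j \<in> Des u then w ! (j - 1) > 0 else w ! j < 0)"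
proof -
  have lw: "length w = n" and wi: "\<And>i. i < n \<Longrightarrow> w ! i = u ! i \<or> w ! i = - (u ! i)"
    using lifts_char[OF u] w by auto
  have lu: "length u = n" using perms_length[OF u] .
  show ?thesis
  proof (cases j)
    case 0
    then show ?thesis using Des_perm_0[OF u] j lw unfolding Des_def wval_def by auto
  next
    case (Suc i)
    have i: "Suc i < n" using Suc j by simp
    have p: "1 \<le> u ! i" and q: "1 \<le> u ! Suc i" using perm_entry[OF u] i by auto
    have pq: "u ! i \<noteq> u ! Suc i"
    proof
      assume "u ! i = u ! Suc i"
      moreover have "distinct u" using u unfolding perms_def by simp
      ultimately show False using i lu by (simp add: nth_eq_iff_index_eq)
    qed
    have dw: "Suc i \<in> Des w \<longleftrightarrow> w ! i > w ! Suc i" using i lw unfolding Des_def wval_def by simp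
    have du: "Suc i \<in> Des u \<longleftrightarrow> u ! i > u ! Suc i" using i lu unfolding Des_def wval_def by simp
    have a: "w ! i = u ! i \<or> w ! i = - (u ! i)" and b: "w ! Suc i = u ! Suc i \<or> w ! Suc i = - (u ! Suc i)"
      using wi i by auto
    show ?thesis unfolding Suc dw du using a b p q pq by auto
  qed
qed

definition cL :: "int list \<Rightarrow> nat set \<Rightarrow> nat \<Rightarrow> int \<Rightarrow> bool" where
  "cL u J i x = (i \<notin> Des u \<longrightarrow> (i \<in> J \<longleftrightarrow> x < 0))"

definition cR :: "int list \<Rightarrow> nat set \<Rightarrow> nat \<Rightarrow> int \<Rightarrow> bool" where
  "cR u J i x = (Suc i \<in> Des u \<longrightarrow> (Suc i \<in> J \<longleftrightarrow> x > 0))"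

lemma Des_eq_iff:
  assumes u: "u \<in> perms n" and w: "w \<in> lifts u" and J: "J \<subseteq> {0..<n}"
  shows "Des w = J \<longleftrightarrow> (\<forall>i<n. cL u J i (w ! i) \<and> cR u J i (w ! i))"
proof -
  have lw: "length w = n" using lifts_char[OF u] w by auto
  have lu: "length u = n" using perms_length[OF u] .
  have Dw: "Des w \<subseteq> {0..<n}" using Des_sub[of w] lw by simp
  have Du: "Des u \<subseteq> {0..<n}" using Des_sub[of u] lu by simp
  have "Des w = J \<longleftrightarrow> (\<forall>j<n. j \<in> Des w \<longleftrightarrow> j \<in> J)" using Dw J by auto
  also have "\<dots> \<longleftrightarrow> (\<forall>i<n. cL u J i (w ! i) \<and> cR u J i (w ! i))"
  proof
    assume A: "\<forall>j<n. j \<in> Des w \<longleftrightarrow> j \<in> J"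
    show "\<forall>i<n. cL u J i (w ! i) \<and> cR u J i (w ! i)"
    proof (intro allI impI conjI)
      fix i assume i: "i < n"
      show "cL u J i (w ! i)" unfolding cL_def using A i Des_lift[OF u w i] by auto
      show "cR u J i (w ! i)" unfolding cR_def
      proof
        assume s: "Suc i \<in> Des u"
        then have si: "Suc i < n" using Du by auto
        show "Suc i \<in> J \<longleftrightarrow> w ! i > 0" using A si Des_lift[OF u w si] s by auto
      qed
    qed
  next
    assume B: "\<forall>i<n. cL u J i (w ! i) \<and> cR u J i (w ! i)"
    show "\<forall>j<n. j \<in> Des w \<longleftrightarrow> j \<in> J"
    proof (intro allI impI)
      fix j assume j: "j < n"
      show "j \<in> Des w \<longleftrightarrow> j \<in> J"
      proof (cases "j \<in> Des u")
        case False
        then show ?thesis using B j Des_lift[OF u w j] unfolding cL_def by auto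
      next
        case True
        then have "j \<noteq> 0" using Des_perm_0[OF u] by metis
        then obtain i where ji: "j = Suc i" by (cases j) auto
        then have "i < n" using j by simp
        then show ?thesis using B True ji Des_lift[OF u w j] unfolding cR_def by auto
      qed
    qed
  qed
  finally show ?thesis .
qed

lemma card_lists:
  assumes "\<And>i. i < n \<Longrightarrow> finite (A i)"
  shows "card {w. length w = n \<and> (\<forall>i<n. w ! i \<in> A i)} = (\<Prod>i<n. card (A i))"
  using assms
proof (induction n)
  case 0
  have "{w. length w = 0 \<and> (\<forall>i<0. w ! i \<in> A i)} = {[]}" by auto
  then show ?case by simp
next
  case (Suc n)
  let ?S = "\<lambda>n. {w. length w = n \<and> (\<forall>i<n. w ! i \<in> A i)}"
  have eq: "?S (Suc n) = (\<lambda>(xs, x). xs @ [x]) ` (?S n \<times> A n)"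
  proof
    show "?S (Suc n) \<subseteq> (\<lambda>(xs, x). xs @ [x]) ` (?S n \<times> A n)"
    proof
      fix w assume w: "w \<in> ?S (Suc n)"
      then have lw: "length w = Suc n" by simp
      have "w = take n w @ [w ! n]" using lw take_Suc_conv_app_nth[of n w] by simp
      moreover have "take n w \<in> ?S n" using w by auto
      moreover have "w ! n \<in> A n" using w by auto
      ultimately show "w \<in> (\<lambda>(xs, x). xs @ [x]) ` (?S n \<times> A n)" by (intro rev_image_eqI[of "(take n w, w ! n)"]) auto
    qed
    show "(\<lambda>(xs, x). xs @ [x]) ` (?S n \<times> A n) \<subseteq> ?S (Suc n)"
    proof
      fix w assume "w \<in> (\<lambda>(xs, x). xs @ [x]) ` (?S n \<times> A n)"
      then obtain xs x where w: "w = xs @ [x]" and xs: "xs \<in> ?S n" and x: "x \<in> A n" by auto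
      have "\<forall>i<Suc n. w ! i \<in> A i"
      proof (intro allI impI)
        fix i assume iS: "i < Suc n"
        show "w ! i \<in> A i"
        proof (cases "i < n")
          case True
          then show ?thesis using xs unfolding w by (simp add: nth_append)
        next
          case False
          then have "i = n" using iS by simp
          then show ?thesis using xs x unfolding w by (simp add: nth_append)
        qed
      qed
      then show "w \<in> ?S (Suc n)" using xs w by simp
    qed
  qed
  have inj: "inj_on (\<lambda>(xs, x). xs @ [x]) (?S n \<times> A n)"
    by (rule inj_onI) auto
  have "card (?S (Suc n)) = card (?S n \<times> A n)" unfolding eq by (rule card_image[OF inj])
  also have "\<dots> = card (?S n) * card (A n)" by (rule card_cartesian_product)
  also have "\<dots> = (\<Prod>i<n. card (A i)) * card (A n)" using Suc by simp
  finally show ?case by simp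
qed


lemma card_pm: fixes p :: int assumes p: "p \<noteq> 0"
  shows "card {x. (x = p \<or> x = - p) \<and> Q x} = (if Q p then 1 else 0) + (if Q (- p) then 1 else 0)"
proof -
  have ne: "p \<noteq> - p" using p by simp
  show ?thesis
  proof (cases "Q p")
    case True
    show ?thesis
    proof (cases "Q (- p)")
      case True
      have "{x. (x = p \<or> x = - p) \<and> Q x} = {p, - p}" using \<open>Q p\<close> True by auto
      then show ?thesis using ne \<open>Q p\<close> True by simp
    next
      case False
      have "{x. (x = p \<or> x = - p) \<and> Q x} = {p}" using \<open>Q p\<close> False by auto
      then show ?thesis using \<open>Q p\<close> False by simp
    qed
  next
    case False
    show ?thesis
    proof (cases "Q (- p)")
      case True
      have "{x. (x = p \<or> x = - p) \<and> Q x} = {- p}" using \<open>\<not> Q p\<close> True by auto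
      then show ?thesis using \<open>\<not> Q p\<close> True by simp
    next
      case F2: False
      have "{x. (x = p \<or> x = - p) \<and> Q x} = {}" using \<open>\<not> Q p\<close> F2 by auto
      then show ?thesis using \<open>\<not> Q p\<close> F2 by simp
    qed
  qed
qed

definition pk :: "int list \<Rightarrow> nat \<Rightarrow> bool" where
  "pk u i = (i \<notin> Des u \<and> Suc i \<in> Des u)"

definition vl :: "int list \<Rightarrow> nat \<Rightarrow> bool" where
  "vl u i = (i \<in> Des u \<and> Suc i \<notin> Des u)"

lemma cardA:
  assumes u: "u \<in> perms n" and i: "i < n"
  shows "card {x. (x = u ! i \<or> x = - (u ! i)) \<and> (cL u J i x \<and> cR u J i x)}
     = (if pk u i then (if (i \<in> J) \<noteq> (Suc i \<in> J) then 1 else 0) else if vl u i then 2 else 1)"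
proof -
  have p: "1 \<le> u ! i" using perm_entry[OF u i] by simp
  then have p0: "u ! i \<noteq> 0" by simp
  show ?thesis unfolding card_pm[OF p0] cL_def cR_def pk_def vl_def using p
    by (cases "i \<in> Des u"; cases "Suc i \<in> Des u"; cases "i \<in> J"; cases "Suc i \<in> J") simp_all
qed

lemma prod_pv:
  fixes n :: nat
  assumes "\<And>i. \<not> (Pp i \<and> V i)"
  shows "(\<Prod>i<n. (if Pp i then (if S i then 1 else 0) else if V i then 2 else 1 :: nat))
       = (if \<forall>i<n. Pp i \<longrightarrow> S i then 2 ^ card {i. i < n \<and> V i} else 0)"
proof (induction n)
  case 0
  then show ?case by simp
next
  case (Suc n)
  have cS: "card {i. i < Suc n \<and> V i} = card {i. i < n \<and> V i} + (if V n then 1 else 0)"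
  proof (cases "V n")
    case True
    have "{i. i < Suc n \<and> V i} = insert n {i. i < n \<and> V i}" using True by (auto simp: less_Suc_eq)
    then show ?thesis using True by simp
  next
    case False
    have "{i. i < Suc n \<and> V i} = {i. i < n \<and> V i}" using False by (auto simp: less_Suc_eq)
    then show ?thesis using False by simp
  qed
  have all: "(\<forall>i<Suc n. Pp i \<longrightarrow> S i) = ((\<forall>i<n. Pp i \<longrightarrow> S i) \<and> (Pp n \<longrightarrow> S n))"
    by (auto simp: less_Suc_eq)
  show ?case unfolding prod.lessThan_Suc Suc.IH cS all using assms[of n]
    by (cases "Pp n"; cases "V n"; cases "S n"; cases "\<forall>i<n. Pp i \<longrightarrow> S i") (simp_all add: power_add)
qed

lemma count_pk_vl:
  assumes "0 \<notin> D" "n \<notin> D"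
  shows "card {i. i < n \<and> (i \<notin> D \<and> Suc i \<in> D)} = card {i. i < n \<and> (i \<in> D \<and> Suc i \<notin> D)}"
proof -
  have t: "(\<Sum>i<n. (of_bool (Suc i \<in> D) :: int) - of_bool (i \<in> D)) = 0"
    using sum_lessThan_telescope[of "\<lambda>i. (of_bool (i \<in> D) :: int)" n] assms by simp
  have "(\<Sum>i<n. (of_bool (Suc i \<in> D) :: int) - of_bool (i \<in> D))
      = (\<Sum>i<n. (of_bool (i \<notin> D \<and> Suc i \<in> D) :: int) - of_bool (i \<in> D \<and> Suc i \<notin> D))"
  proof (intro sum.cong refl)
    fix i
    show "(of_bool (Suc i \<in> D) :: int) - of_bool (i \<in> D) = of_bool (i \<notin> D \<and> Suc i \<in> D) - of_bool (i \<in> D \<and> Suc i \<notin> D)"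
      by (cases "Suc i \<in> D"; cases "i \<in> D") simp_all
  qed
  then have "(\<Sum>i<n. (of_bool (i \<notin> D \<and> Suc i \<in> D) :: int)) = (\<Sum>i<n. of_bool (i \<in> D \<and> Suc i \<notin> D))"
    using t by (simp add: sum_subtractf)
  then have "int (card ({..<n} \<inter> {i. i \<notin> D \<and> Suc i \<in> D})) = int (card ({..<n} \<inter> {i. i \<in> D \<and> Suc i \<notin> D}))"
    by simp
  moreover have "{..<n} \<inter> {i. i \<notin> D \<and> Suc i \<in> D} = {i. i < n \<and> (i \<notin> D \<and> Suc i \<in> D)}" by auto
  moreover have "{..<n} \<inter> {i. i \<in> D \<and> Suc i \<notin> D} = {i. i < n \<and> (i \<in> D \<and> Suc i \<notin> D)}" by auto
  ultimately show ?thesis by simp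
qed

lemma wval_neq: assumes u: "u \<in> perms n" and i: "i < n" shows "wval u i \<noteq> wval u (Suc i)"
proof (cases i)
  case 0
  then show ?thesis using perm_entry[OF u i] unfolding wval_def by simp
next
  case (Suc k)
  have lu: "length u = n" using perms_length[OF u] .
  have "distinct u" using u unfolding perms_def by simp
  then have "u ! k \<noteq> u ! Suc k" using i Suc lu by (simp add: nth_eq_iff_index_eq)
  then show ?thesis unfolding wval_def Suc by simp
qed

lemma Peak_pk: assumes u: "u \<in> perms n" shows "Peak u = Suc ` {i. i < n \<and> pk u i}"
proof -
  have lu: "length u = n" using perms_length[OF u] .
  have "Suc i \<in> Peak u \<longleftrightarrow> i < n \<and> pk u i" for i
  proof -
    have d1: "Suc i \<in> Des u \<longleftrightarrow> Suc i < n \<and> wval u (Suc i) > wval u (Suc (Suc i))"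
      unfolding Des_def lu by simp
    have d0: "i < n \<Longrightarrow> (i \<notin> Des u \<longleftrightarrow> wval u i < wval u (Suc i))"
      using wval_neq[OF u, of i] unfolding Des_def lu by auto
    show ?thesis
    proof
      assume "Suc i \<in> Peak u"
      then have a: "Suc i < n" "wval u i < wval u (Suc i)" "wval u (Suc i) > wval u (Suc (Suc i))"
        unfolding Peak_def lu by auto
      then show "i < n \<and> pk u i" unfolding pk_def using d1 d0 by auto
    next
      assume b: "i < n \<and> pk u i"
      then have "Suc i < n" "wval u (Suc i) > wval u (Suc (Suc i))" "wval u i < wval u (Suc i)"
        unfolding pk_def using d1 d0 by auto
      then show "Suc i \<in> Peak u" unfolding Peak_def lu by auto
    qed
  qed
  moreover have "0 \<notin> Peak u" by (rule Peak_0)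
  ultimately show ?thesis
  proof -
    assume A: "\<And>i. (Suc i \<in> Peak u) = (i < n \<and> pk u i)" and B: "0 \<notin> Peak u"
    show ?thesis
    proof
      show "Peak u \<subseteq> Suc ` {i. i < n \<and> pk u i}"
      proof
        fix p assume p: "p \<in> Peak u"
        then have "p \<noteq> 0" using B by metis
        then obtain i where "p = Suc i" by (cases p) auto
        then show "p \<in> Suc ` {i. i < n \<and> pk u i}" using A p by auto
      qed
      show "Suc ` {i. i < n \<and> pk u i} \<subseteq> Peak u" using A by auto
    qed
  qed
qed

definition sep :: "nat set \<Rightarrow> nat set \<Rightarrow> bool" where
  "sep J Pk = (\<forall>k\<in>Pk. (k - 1 \<in> J) \<noteq> (k \<in> J))"

lemma KL:
  assumes u: "u \<in> perms n" and J: "J \<subseteq> {0..<n}"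
  shows "card {w \<in> lifts u. Des w = J} = (if sep J (Peak u) then 2 ^ card (Peak u) else 0)"
proof -
  define A where "A i = {x. (x = u ! i \<or> x = - (u ! i)) \<and> (cL u J i x \<and> cR u J i x)}" for i
  have lu: "length u = n" using perms_length[OF u] .
  have eq: "{w \<in> lifts u. Des w = J} = {w. length w = n \<and> (\<forall>i<n. w ! i \<in> A i)}"
  proof
    show "{w \<in> lifts u. Des w = J} \<subseteq> {w. length w = n \<and> (\<forall>i<n. w ! i \<in> A i)}"
    proof
      fix w assume "w \<in> {w \<in> lifts u. Des w = J}"
      then have w: "w \<in> lifts u" and d: "Des w = J" by auto
      have c: "\<forall>i<n. cL u J i (w ! i) \<and> cR u J i (w ! i)" using Des_eq_iff[OF u w J] d by simp
      have l: "length w = n \<and> (\<forall>i<n. w ! i = u ! i \<or> w ! i = - (u ! i))" using lifts_char[OF u] w by simp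
      show "w \<in> {w. length w = n \<and> (\<forall>i<n. w ! i \<in> A i)}" unfolding A_def using c l by simp
    qed
    show "{w. length w = n \<and> (\<forall>i<n. w ! i \<in> A i)} \<subseteq> {w \<in> lifts u. Des w = J}"
    proof
      fix w assume "w \<in> {w. length w = n \<and> (\<forall>i<n. w ! i \<in> A i)}"
      then have l: "length w = n" and a: "\<forall>i<n. w ! i \<in> A i" by auto
      have w: "w \<in> lifts u" using lifts_char[OF u] l a unfolding A_def by simp
      have "Des w = J" using Des_eq_iff[OF u w J] a unfolding A_def by simp
      then show "w \<in> {w \<in> lifts u. Des w = J}" using w by simp
    qed
  qed
  have fin: "finite (A i)" for i
  proof -
    have "A i \<subseteq> {u ! i, - (u ! i)}" unfolding A_def by auto
    then show ?thesis by (rule finite_subset) simp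
  qed
  have "card {w \<in> lifts u. Des w = J} = (\<Prod>i<n. card (A i))" unfolding eq by (rule card_lists[OF fin])
  also have "\<dots> = (\<Prod>i<n. (if pk u i then (if (i \<in> J) \<noteq> (Suc i \<in> J) then 1 else 0) else if vl u i then 2 else 1))"
    unfolding A_def by (intro prod.cong refl) (simp add: cardA[OF u])
  also have "\<dots> = (if \<forall>i<n. pk u i \<longrightarrow> (i \<in> J) \<noteq> (Suc i \<in> J) then 2 ^ card {i. i < n \<and> vl u i} else 0)"
    by (rule prod_pv) (auto simp: pk_def vl_def)
  also have "card {i. i < n \<and> vl u i} = card (Peak u)"
  proof -
    have "n \<notin> Des u" using Des_sub[of u] lu by auto
    then have "card {i. i < n \<and> pk u i} = card {i. i < n \<and> vl u i}"
      unfolding pk_def vl_def using count_pk_vl[OF Des_perm_0[OF u]] by simp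
    moreover have "card (Peak u) = card {i. i < n \<and> pk u i}" unfolding Peak_pk[OF u] by (simp add: card_image)
    ultimately show ?thesis by simp
  qed
  also have "(\<forall>i<n. pk u i \<longrightarrow> (i \<in> J) \<noteq> (Suc i \<in> J)) = sep J (Peak u)"
    unfolding sep_def Peak_pk[OF u] by auto
  finally show ?thesis .
qed

lemma group_sum:
  fixes h :: "nat set \<Rightarrow> rat"
  assumes L: "finite L" and S: "finite S" and D: "\<And>w. w \<in> L \<Longrightarrow> Des w \<subseteq> S"
  shows "(\<Sum>w\<in>L. h (Des w)) = (\<Sum>J\<in>Pow S. h J * of_nat (card {w\<in>L. Des w = J}))"
proof -
  have "(\<Sum>w\<in>L. h (Des w)) = (\<Sum>w\<in>L. \<Sum>J\<in>Pow S. if Des w = J then h J else 0)"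
  proof (intro sum.cong refl)
    fix w assume "w \<in> L"
    then have "Des w \<in> Pow S" using D by auto
    then show "h (Des w) = (\<Sum>J\<in>Pow S. if Des w = J then h J else 0)" using S by (simp add: sum.delta)
  qed
  also have "\<dots> = (\<Sum>J\<in>Pow S. \<Sum>w\<in>L. if Des w = J then h J else 0)" by (rule sum.swap)
  also have "\<dots> = (\<Sum>J\<in>Pow S. h J * of_nat (card {w\<in>L. Des w = J}))"
  proof (intro sum.cong refl)
    fix J
    have "(\<Sum>w\<in>L. if Des w = J then h J else 0) = (\<Sum>w\<in>{w\<in>L. Des w = J}. h J)"
      by (rule sum.inter_filter[symmetric, OF L])
    also have "\<dots> = h J * of_nat (card {w\<in>L. Des w = J})" by simp
    finally show "(\<Sum>w\<in>L. if Des w = J then h J else 0) = h J * of_nat (card {w\<in>L. Des w = J})" .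
  qed
  finally show ?thesis .
qed

definition Tm :: "nat \<Rightarrow> (nat set \<Rightarrow> rat) \<Rightarrow> nat set \<Rightarrow> rat" where
  "Tm n h Pk = 2 ^ card Pk * (\<Sum>J\<in>Pow {0..<n}. if sep J Pk then h J else 0)"

lemma phi_formula:
  fixes h :: "nat set \<Rightarrow> rat"
  assumes f: "f = (\<lambda>w. if w \<in> signed_perms n then h (Des w) else 0)"
  shows "phi f = (\<lambda>u. if u \<in> perms n then Tm n h (Peak u) else 0)"
proof
  fix u
  show "phi f u = (if u \<in> perms n then Tm n h (Peak u) else 0)"
  proof (cases "u \<in> perms n")
    case True
    have lu: "length u = n" using perms_length[OF True] .
    have "phi f u = (\<Sum>w\<in>lifts u. h (Des w))"
      unfolding phi_lifts f by (intro sum.cong refl) (simp add: lifts_def lu)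
    also have "\<dots> = (\<Sum>J\<in>Pow {0..<n}. h J * of_nat (card {w\<in>lifts u. Des w = J}))"
    proof (rule group_sum[OF finite_lifts])
      fix w assume "w \<in> lifts u"
      then have "length w = n" unfolding lifts_def using lu sp_length by auto
      then show "Des w \<subseteq> {0..<n}" using Des_sub[of w] by simp
    qed simp
    also have "\<dots> = (\<Sum>J\<in>Pow {0..<n}. h J * (if sep J (Peak u) then 2 ^ card (Peak u) else 0))"
      by (intro sum.cong refl) (simp add: KL[OF True])
    also have "\<dots> = Tm n h (Peak u)" unfolding Tm_def
      by (simp add: sum_distrib_left if_distrib mult.commute cong: if_cong)
    finally show ?thesis using True by simp
  next
    case False
    have "phi f u = 0" unfolding phi_lifts
    proof (intro sum.neutral ballI)
      fix w assume w: "w \<in> lifts u"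
      have "w \<notin> signed_perms n"
      proof
        assume "w \<in> signed_perms n"
        moreover have "map abs w = u" using w unfolding lifts_def by simp
        ultimately have "u \<in> perms n" by (rule lift_perm)
        then show False using False by simp
      qed
      then show "f w = 0" unfolding f by simp
    qed
    then show ?thesis using False by simp
  qed
qed

lemma phi_SigmaB_sub: "phi ` SigmaB m \<subseteq> PeakAlg m"
proof
  fix g assume "g \<in> phi ` SigmaB m"
  then obtain f where f: "f \<in> SigmaB m" and g: "g = phi f" by auto
  from f obtain h :: "nat set \<Rightarrow> rat" where fh: "f = (\<lambda>w. if w \<in> signed_perms m then h (Des w) else 0)"
    unfolding SigmaB_char by auto
  show "g \<in> PeakAlg m" unfolding g phi_formula[OF fh] PeakAlg_char
    by (intro CollectI exI[of _ "Tm m h"]) (rule refl)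
qed


definition Jp :: "nat \<Rightarrow> nat set \<Rightarrow> nat set" where
  "Jp m G = {j \<in> {0..<m}. odd (card (G \<inter> {1..j}))}"

lemma Jp_sub: "Jp m G \<subseteq> {1..<m}"
proof
  fix j assume j: "j \<in> Jp m G"
  then have o: "odd (card (G \<inter> {1..j}))" unfolding Jp_def by auto
  have "j \<noteq> 0"
  proof
    assume "j = 0"
    then have "G \<inter> {1..j} = {}" by auto
    with o show False by simp
  qed
  then show "j \<in> {1..<m}" using j unfolding Jp_def by auto
qed

lemma sep_Jp:
  assumes G: "finite G" and Pk: "Pk \<subseteq> {1..<m}"
  shows "sep (Jp m G) Pk \<longleftrightarrow> Pk \<subseteq> G"
proof -
  have step: "((k - 1) \<in> Jp m G) \<noteq> (k \<in> Jp m G) \<longleftrightarrow> k \<in> G" if k: "k \<in> Pk" for k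
  proof -
    have k1: "1 \<le> k" "k < m" using k Pk by auto
    have ik: "{1..k} = insert k {1..k - 1}" using k1 by auto
    have e: "G \<inter> {1..k} = (if k \<in> G then insert k (G \<inter> {1..k - 1}) else G \<inter> {1..k - 1})"
      unfolding ik by (rule Int_insert_right)
    have c: "card (G \<inter> {1..k}) = card (G \<inter> {1..k - 1}) + (if k \<in> G then 1 else 0)"
    proof -
      have "finite (G \<inter> {1..k - 1})" using G by simp
      moreover have "k \<notin> G \<inter> {1..k - 1}" using k1 by auto
      ultimately show ?thesis unfolding e by simp
    qed
    have "(k - 1 \<in> Jp m G) = odd (card (G \<inter> {1..k - 1}))" unfolding Jp_def using k1 by auto
    moreover have "(k \<in> Jp m G) = odd (card (G \<inter> {1..k}))" unfolding Jp_def using k1 by auto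
    ultimately show ?thesis unfolding c by auto
  qed
  show ?thesis unfolding sep_def using step by auto
qed

lemma inv_lemma:
  assumes F: "finite F" and S: "finite S" and JS: "\<And>G. G \<subseteq> F \<Longrightarrow> Jp m G \<subseteq> S" and Pk: "Pk \<subseteq> {1..<m}"
  shows "(\<Sum>J\<in>Pow S. if sep J Pk then (\<Sum>G\<in>Pow F. (-1) ^ card (F - G) * (if J = Jp m G then 1 else 0)) else 0)
       = (if Pk = F then (1::rat) else 0)"
proof -
  have "(\<Sum>J\<in>Pow S. if sep J Pk then (\<Sum>G\<in>Pow F. (-1) ^ card (F - G) * (if J = Jp m G then 1 else 0)) else (0::rat))
      = (\<Sum>J\<in>Pow S. \<Sum>G\<in>Pow F. if sep J Pk \<and> J = Jp m G then (-1) ^ card (F - G) else 0)"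
    by (intro sum.cong refl) (auto intro: sum.cong)
  also have "\<dots> = (\<Sum>G\<in>Pow F. \<Sum>J\<in>Pow S. if sep J Pk \<and> J = Jp m G then (-1) ^ card (F - G) else 0)"
    by (rule sum.swap)
  also have "\<dots> = (\<Sum>G\<in>Pow F. if sep (Jp m G) Pk then (-1) ^ card (F - G) else 0)"
  proof (intro sum.cong refl)
    fix G assume "G \<in> Pow F"
    then have "Jp m G \<in> Pow S" using JS by auto
    have "(\<Sum>J\<in>Pow S. if sep J Pk \<and> J = Jp m G then (-1) ^ card (F - G) else (0::rat))
        = (\<Sum>J\<in>Pow S. if J = Jp m G then (if sep (Jp m G) Pk then (-1) ^ card (F - G) else 0) else (0::rat))"
      by (intro sum.cong refl) auto
    also have "\<dots> = (if sep (Jp m G) Pk then (-1) ^ card (F - G) else 0)"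
      using S \<open>Jp m G \<in> Pow S\<close> by (simp add: sum.delta')
    finally show "(\<Sum>J\<in>Pow S. if sep J Pk \<and> J = Jp m G then (-1) ^ card (F - G) else (0::rat))
        = (if sep (Jp m G) Pk then (-1) ^ card (F - G) else 0)" .
  qed
  also have "\<dots> = (\<Sum>G\<in>Pow F. if Pk \<subseteq> G then (-1) ^ card (F - G) else 0)"
  proof (intro sum.cong refl)
    fix G assume "G \<in> Pow F"
    then have "finite G" using F finite_subset by auto
    then show "(if sep (Jp m G) Pk then (-1::rat) ^ card (F - G) else 0) = (if Pk \<subseteq> G then (-1) ^ card (F - G) else 0)"
      using sep_Jp[OF _ Pk] by simp
  qed
  also have "\<dots> = (if Pk = F then 1 else 0)" by (rule alt_sum[OF F])
  finally show ?thesis .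
qed

definition hh :: "nat \<Rightarrow> nat set \<Rightarrow> nat set \<Rightarrow> rat" where
  "hh m F J = (\<Sum>G\<in>Pow F. (-1) ^ card (F - G) * (if J = Jp m G then 1 else 0))"

lemma sum_if_swap:
  fixes a :: "'b \<Rightarrow> rat"
  shows "(\<Sum>J\<in>A. if Q J then (\<Sum>F\<in>B. a F * k F J) else 0) = (\<Sum>F\<in>B. a F * (\<Sum>J\<in>A. if Q J then k F J else 0))"
proof -
  have "(\<Sum>J\<in>A. if Q J then (\<Sum>F\<in>B. a F * k F J) else 0) = (\<Sum>J\<in>A. \<Sum>F\<in>B. a F * (if Q J then k F J else 0))"
    by (intro sum.cong refl) auto
  also have "\<dots> = (\<Sum>F\<in>B. \<Sum>J\<in>A. a F * (if Q J then k F J else 0))" by (rule sum.swap)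
  also have "\<dots> = (\<Sum>F\<in>B. a F * (\<Sum>J\<in>A. if Q J then k F J else 0))" by (simp add: sum_distrib_left)
  finally show ?thesis .
qed

lemma phi_SigmaB_sup: "PeakAlg m \<subseteq> phi ` SigmaB m"
proof
  fix g assume "g \<in> PeakAlg m"
  then obtain a :: "nat set \<Rightarrow> rat" where ga: "g = (\<lambda>u. if u \<in> perms m then a (Peak u) else 0)"
    unfolding PeakAlg_char by auto
  define h where "h J = (\<Sum>F\<in>Fsets m. (a F * (1/2) ^ card F) * hh m F J)" for J
  define f where "f = (\<lambda>w. if w \<in> signed_perms m then h (Des w) else 0)"
  have fS: "f \<in> SigmaB m" unfolding SigmaB_char f_def by blast
  have T: "Tm m h Pk = a Pk" if Pk: "Pk \<in> Fsets m" for Pk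
  proof -
    have Pk1: "Pk \<subseteq> {1..<m}" using Pk unfolding Fsets_def by auto
    have "Tm m h Pk = 2 ^ card Pk * (\<Sum>F\<in>Fsets m. (a F * (1/2) ^ card F) * (\<Sum>J\<in>Pow {0..<m}. if sep J Pk then hh m F J else 0))"
      unfolding Tm_def h_def sum_if_swap ..
    also have "\<dots> = 2 ^ card Pk * (\<Sum>F\<in>Fsets m. (a F * (1/2) ^ card F) * (if Pk = F then 1 else 0))"
    proof -
      have "(\<Sum>J\<in>Pow {0..<m}. if sep J Pk then hh m F J else 0) = (if Pk = F then 1 else 0)" if F: "F \<in> Fsets m" for F
      proof -
        have "finite F" using F finite_subset unfolding Fsets_def by auto
        moreover have "\<And>G. G \<subseteq> F \<Longrightarrow> Jp m G \<subseteq> {0..<m}" unfolding Jp_def by auto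
        ultimately show ?thesis unfolding hh_def by (intro inv_lemma Pk1) auto
      qed
      then show ?thesis by (intro arg_cong[where f="\<lambda>x. 2 ^ card Pk * x"] sum.cong refl) auto
    qed
    also have "\<dots> = 2 ^ card Pk * (a Pk * (1/2) ^ card Pk)"
      using Pk finite_Fsets by (simp add: if_distrib[where f="\<lambda>x. _ * x"] sum.delta cong: if_cong)
    also have "\<dots> = a Pk" by (simp add: power_one_over)
    finally show ?thesis .
  qed
  have "phi f = g"
  proof
    fix u
    show "phi f u = g u"
    proof (cases "u \<in> perms m")
      case True
      have "Peak u \<in> Fsets m" using Peak_Fsets[of u] perms_length[OF True] by simp
      then show ?thesis unfolding phi_formula[OF f_def] ga using True T by simp
    qed (simp add: phi_formula[OF f_def] ga)
  qed
  then show "g \<in> phi ` SigmaB m" using fS by blast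
qed


lemma split_insert:
  fixes \<psi> :: "nat set \<Rightarrow> rat"
  assumes a: "a \<notin> A" and A: "finite A"
  shows "(\<Sum>J\<in>Pow (insert a A). \<psi> J) = (\<Sum>J\<in>Pow A. \<psi> J + \<psi> (insert a J))"
proof -
  have inj: "inj_on (insert a) (Pow A)"
  proof (rule inj_on_inverseI[where g="\<lambda>J. J - {a}"])
    fix J assume "J \<in> Pow A"
    then show "insert a J - {a} = J" using a by auto
  qed
  have disj: "Pow A \<inter> insert a ` Pow A = {}" using a by auto
  have "(\<Sum>J\<in>Pow (insert a A). \<psi> J) = (\<Sum>J\<in>Pow A. \<psi> J) + (\<Sum>J\<in>insert a ` Pow A. \<psi> J)"
    unfolding Pow_insert using A disj by (intro sum.union_disjoint) auto
  also have "(\<Sum>J\<in>insert a ` Pow A. \<psi> J) = (\<Sum>J\<in>Pow A. \<psi> (insert a J))"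
    using sum.reindex[OF inj, of \<psi>] by (simp add: comp_def)
  finally show ?thesis by (simp add: sum.distrib)
qed

lemma zero_upt: "1 \<le> (n::nat) \<Longrightarrow> {0..<n} = insert 0 {1..<n}"
  by auto

lemma I01_k:
  fixes k :: "nat set \<Rightarrow> rat"
  assumes n: "1 \<le> n"
  shows "(\<lambda>w. if w \<in> signed_perms n then k (Des w - {0}) else 0) \<in> I01 n"
proof -
  obtain c where c: "\<forall>D\<subseteq>{1..<n}. k D = (\<Sum>J\<in>Pow {1..<n}. c J * (if D \<subseteq> J then 1 else 0))"
    using mobius_exists[of "{1..<n}" k] by auto
  define c' where "c' J = (if 0 \<in> J then c (J - {0}) else 0)" for J
  have key: "(\<Sum>J\<in>Pow {0..<n}. (if 0 \<in> J \<or> 1 \<in> J then c' J else 0) * (if D \<subseteq> J then 1 else 0)) = k (D - {0})"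
    if D: "D \<subseteq> {0..<n}" for D
  proof -
    have "(\<Sum>J\<in>Pow {0..<n}. (if 0 \<in> J \<or> 1 \<in> J then c' J else 0) * (if D \<subseteq> J then 1 else 0))
        = (\<Sum>J\<in>Pow (insert 0 {1..<n}). c' J * (if D \<subseteq> J then 1 else 0))"
      unfolding zero_upt[OF n] by (intro sum.cong refl) (simp add: c'_def)
    also have "\<dots> = (\<Sum>J\<in>Pow {1..<n}. c' J * (if D \<subseteq> J then 1 else 0) + c' (insert 0 J) * (if D \<subseteq> insert 0 J then 1 else 0))"
      by (rule split_insert) auto
    also have "\<dots> = (\<Sum>J\<in>Pow {1..<n}. c J * (if D - {0} \<subseteq> J then 1 else 0))"
    proof (intro sum.cong refl)
      fix J assume J: "J \<in> Pow {1..<n}"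
      then have "0 \<notin> J" by auto
      then have "c' J = 0" "c' (insert 0 J) = c J" "insert 0 J - {0} = J" unfolding c'_def by auto
      moreover have "(D \<subseteq> insert 0 J) = (D - {0} \<subseteq> J)" by auto
      ultimately show "c' J * (if D \<subseteq> J then 1 else 0) + c' (insert 0 J) * (if D \<subseteq> insert 0 J then 1 else 0)
          = c J * (if D - {0} \<subseteq> J then 1 else 0)" by simp
    qed
    also have "\<dots> = k (D - {0})"
    proof -
      have DD: "D - {0} \<subseteq> {1..<n}" using D by auto
      show ?thesis using c[rule_format, OF DD] by simp
    qed
    finally show ?thesis .
  qed
  have "(\<lambda>w. if w \<in> signed_perms n then k (Des w - {0}) else 0)
      = (\<lambda>w. \<Sum>J\<in>{J\<in>Pow {0..<n}. 0 \<in> J \<or> 1 \<in> J}. c' J * X n J w)"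
  proof
    fix w
    show "(if w \<in> signed_perms n then k (Des w - {0}) else 0) = (\<Sum>J\<in>{J\<in>Pow {0..<n}. 0 \<in> J \<or> 1 \<in> J}. c' J * X n J w)"
    proof (cases "w \<in> signed_perms n")
      case True
      then have "Des w \<subseteq> {0..<n}" using Des_sub[of w] sp_length[OF True] by simp
      then show ?thesis unfolding I01_alt unfolding sumX using key True by simp
    next
      case False
      then show ?thesis unfolding I01_alt unfolding sumX by simp
    qed
  qed
  then show ?thesis unfolding I01_def by (intro CollectI exI[of _ c'])
qed

lemma sep_ins0:
  assumes J0: "0 \<notin> J" and P0: "0 \<notin> Pk"
  shows "sep J Pk = ((1 \<in> Pk \<longrightarrow> 1 \<in> J) \<and> sep J (Pk - {1}))"
    and "sep (insert 0 J) Pk = ((1 \<in> Pk \<longrightarrow> 1 \<notin> J) \<and> sep J (Pk - {1}))"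
proof -
  have bs: "\<And>Q. (\<forall>k\<in>Pk. Q k) = ((1 \<in> Pk \<longrightarrow> Q 1) \<and> (\<forall>k\<in>Pk - {1}. Q k))" by blast
  have q1: "((1 - 1 \<in> J) \<noteq> (1 \<in> J)) = (1 \<in> J)" using J0 by simp
  show "sep J Pk = ((1 \<in> Pk \<longrightarrow> 1 \<in> J) \<and> sep J (Pk - {1}))"
    unfolding sep_def bs[of "\<lambda>k. (k - 1 \<in> J) \<noteq> (k \<in> J)"] q1 ..
  have q2: "((1 - 1 \<in> insert 0 J) \<noteq> (1 \<in> insert 0 J)) = (1 \<notin> J)" by simp
  have q3: "(\<forall>k\<in>Pk - {1}. (k - 1 \<in> insert 0 J) \<noteq> (k \<in> insert 0 J)) = (\<forall>k\<in>Pk - {1}. (k - 1 \<in> J) \<noteq> (k \<in> J))"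
  proof (intro ball_cong refl)
    fix k assume k: "k \<in> Pk - {1}"
    then have "k \<noteq> 0" using P0 by (metis DiffD1)
    then have "k - 1 \<noteq> 0" using k by auto
    then show "((k - 1 \<in> insert 0 J) \<noteq> (k \<in> insert 0 J)) = ((k - 1 \<in> J) \<noteq> (k \<in> J))" using \<open>k \<noteq> 0\<close> by simp
  qed
  show "sep (insert 0 J) Pk = ((1 \<in> Pk \<longrightarrow> 1 \<notin> J) \<and> sep J (Pk - {1}))"
    unfolding sep_def bs[of "\<lambda>k. (k - 1 \<in> insert 0 J) \<noteq> (k \<in> insert 0 J)"] q2 q3 ..
qed

lemma Tm_k:
  fixes k :: "nat set \<Rightarrow> rat"
  assumes n: "1 \<le> n" and Pk: "Pk \<subseteq> {1..<n}"
  shows "Tm n (\<lambda>J. k (J - {0})) Pk = 2 ^ (card (Pk - {1}) + 1) * (\<Sum>J\<in>Pow {1..<n}. if sep J (Pk - {1}) then k J else 0)"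
proof -
  have P0: "0 \<notin> Pk" using Pk by auto
  have fin: "finite Pk" using Pk finite_subset by auto
  have "(\<Sum>J\<in>Pow {0..<n}. if sep J Pk then k (J - {0}) else 0)
      = (\<Sum>J\<in>Pow {1..<n}. (if sep J Pk then k (J - {0}) else 0) + (if sep (insert 0 J) Pk then k (insert 0 J - {0}) else 0))"
    unfolding zero_upt[OF n] by (rule split_insert) auto
  also have "\<dots> = (\<Sum>J\<in>Pow {1..<n}. (if 1 \<in> Pk then 1 else 2) * (if sep J (Pk - {1}) then k J else 0))"
  proof (intro sum.cong refl)
    fix J assume "J \<in> Pow {1..<n}"
    then have J0: "0 \<notin> J" by auto
    then have e: "J - {0} = J" "insert 0 J - {0} = J" by auto
    show "(if sep J Pk then k (J - {0}) else 0) + (if sep (insert 0 J) Pk then k (insert 0 J - {0}) else 0)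
        = (if 1 \<in> Pk then 1 else 2) * (if sep J (Pk - {1}) then k J else 0)"
      unfolding e sep_ins0[OF J0 P0] by (cases "1 \<in> Pk"; cases "1 \<in> J") auto
  qed
  also have "\<dots> = (if 1 \<in> Pk then 1 else 2) * (\<Sum>J\<in>Pow {1..<n}. if sep J (Pk - {1}) then k J else 0)"
    by (simp add: sum_distrib_left)
  finally have eq: "(\<Sum>J\<in>Pow {0..<n}. if sep J Pk then k (J - {0}) else 0)
      = (if 1 \<in> Pk then 1 else 2) * (\<Sum>J\<in>Pow {1..<n}. if sep J (Pk - {1}) then k J else 0)" .
  have "2 ^ card Pk * (if 1 \<in> Pk then 1 else 2) = (2::rat) ^ (card (Pk - {1}) + 1)"
  proof (cases "1 \<in> Pk")
    case True
    then have "card Pk = card (Pk - {1}) + 1" using card.remove[OF fin True] by simp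
    then show ?thesis using True by simp
  next
    case False
    then show ?thesis by simp
  qed
  then show ?thesis unfolding Tm_def eq by (simp add: mult.assoc[symmetric])
qed

lemma phi_I01_sup: assumes n: "1 \<le> n" shows "PeakAlgO n \<subseteq> phi ` I01 n"
proof
  fix g assume "g \<in> PeakAlgO n"
  then obtain c :: "nat set \<Rightarrow> rat" where gc: "g = (\<lambda>u. if u \<in> perms n then c (PeakO u) else 0)"
    unfolding PeakAlgO_char by auto
  define kk where "kk J = (\<Sum>G\<in>FsetsO n. (c G * (1/2) ^ (card G + 1)) * hh n G J)" for J
  define f where "f = (\<lambda>w. if w \<in> signed_perms n then kk (Des w - {0}) else 0)"
  have fI: "f \<in> I01 n" unfolding f_def by (rule I01_k[OF n])
  have fh: "f = (\<lambda>w. if w \<in> signed_perms n then (\<lambda>J. kk (J - {0})) (Des w) else 0)" unfolding f_def by simp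
  have T: "Tm n (\<lambda>J. kk (J - {0})) Pk = c (Pk - {1})" if Pk: "Pk \<in> Fsets n" for Pk
  proof -
    have Pk1: "Pk \<subseteq> {1..<n}" using Pk unfolding Fsets_def by auto
    have PO: "Pk - {1} \<in> FsetsO n" using Pk unfolding FsetsO_def Fsets_def by auto
    have PO1: "Pk - {1} \<subseteq> {1..<n}" using Pk1 by auto
    have "Tm n (\<lambda>J. kk (J - {0})) Pk = 2 ^ (card (Pk - {1}) + 1) *
        (\<Sum>G\<in>FsetsO n. (c G * (1/2) ^ (card G + 1)) * (\<Sum>J\<in>Pow {1..<n}. if sep J (Pk - {1}) then hh n G J else 0))"
      by (simp only: Tm_k[OF n Pk1]) (simp only: kk_def sum_if_swap)
    also have "\<dots> = 2 ^ (card (Pk - {1}) + 1) * (\<Sum>G\<in>FsetsO n. (c G * (1/2) ^ (card G + 1)) * (if Pk - {1} = G then 1 else 0))"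
    proof -
      have "(\<Sum>J\<in>Pow {1..<n}. if sep J (Pk - {1}) then hh n G J else 0) = (if Pk - {1} = G then 1 else 0)" if G: "G \<in> FsetsO n" for G
      proof -
        have "finite G" using G finite_subset unfolding FsetsO_def Fsets_def by auto
        moreover have "\<And>H. H \<subseteq> G \<Longrightarrow> Jp n H \<subseteq> {1..<n}" using Jp_sub by auto
        ultimately show ?thesis unfolding hh_def by (intro inv_lemma PO1) auto
      qed
      then show ?thesis by (intro arg_cong[where f="\<lambda>x. 2 ^ (card (Pk - {1}) + 1) * x"] sum.cong refl) auto
    qed
    also have "\<dots> = 2 ^ (card (Pk - {1}) + 1) * (c (Pk - {1}) * (1/2) ^ (card (Pk - {1}) + 1))"
      using PO finite_FsetsO by (simp add: if_distrib[where f="\<lambda>x. _ * x"] sum.delta cong: if_cong)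
    also have "\<dots> = c (Pk - {1})" by (simp add: power_one_over)
    finally show ?thesis .
  qed
  have "phi f = g"
  proof
    fix u
    show "phi f u = g u"
    proof (cases "u \<in> perms n")
      case True
      have "Peak u \<in> Fsets n" using Peak_Fsets[of u] perms_length[OF True] by simp
      then show ?thesis unfolding phi_formula[OF fh] gc PeakO_def using True T by simp
    qed (simp add: phi_formula[OF fh] gc)
  qed
  then show "g \<in> phi ` I01 n" using fI by blast
qed

lemma Pow_2n: assumes n: "2 \<le> n" shows "up2 ` Pow {0..<n - 2} = Pow {2..<n}"
proof -
  have "{J \<in> Pow {0..<n}. 0 \<notin> J \<and> 1 \<notin> J} = Pow {2..<n}"
  proof (intro set_eqI iffI)
    fix J assume "J \<in> {J \<in> Pow {0..<n}. 0 \<notin> J \<and> 1 \<notin> J}"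
    then have a: "J \<subseteq> {0..<n}" "0 \<notin> J" "1 \<notin> J" by auto
    show "J \<in> Pow {2..<n}"
    proof (simp, rule subsetI)
      fix x assume x: "x \<in> J"
      then have "x \<noteq> 0" "x \<noteq> 1" using a by (metis, metis)
      moreover have "x < n" using x a by auto
      ultimately show "x \<in> {2..<n}" by auto
    qed
  next
    fix J assume "J \<in> Pow {2..<n}"
    then show "J \<in> {J \<in> Pow {0..<n}. 0 \<notin> J \<and> 1 \<notin> J}" by auto
  qed
  then show ?thesis using up2_Pow[OF n] by simp
qed

lemma split4:
  fixes \<psi> :: "nat set \<Rightarrow> rat"
  assumes n: "2 \<le> n"
  shows "(\<Sum>J\<in>Pow {0..<n}. \<psi> J) = (\<Sum>K\<in>Pow {0..<n - 2}.
     \<psi> (up2 K) + \<psi> (insert 1 (up2 K)) + \<psi> (insert 0 (up2 K)) + \<psi> (insert 0 (insert 1 (up2 K))))"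
proof -
  have e: "{0..<n} = insert 0 (insert 1 {2..<n})" using n by auto
  have "(\<Sum>J\<in>Pow {0..<n}. \<psi> J) = (\<Sum>J\<in>Pow (insert 1 {2..<n}). \<psi> J + \<psi> (insert 0 J))"
    unfolding e by (rule split_insert) auto
  also have "\<dots> = (\<Sum>J\<in>Pow {2..<n}. (\<psi> J + \<psi> (insert 0 J)) + (\<psi> (insert 1 J) + \<psi> (insert 0 (insert 1 J))))"
    by (rule split_insert) auto
  also have "\<dots> = (\<Sum>J\<in>up2 ` Pow {0..<n - 2}. (\<psi> J + \<psi> (insert 0 J)) + (\<psi> (insert 1 J) + \<psi> (insert 0 (insert 1 J))))"
    unfolding Pow_2n[OF n] ..
  also have "\<dots> = (\<Sum>K\<in>Pow {0..<n - 2}. (\<psi> (up2 K) + \<psi> (insert 0 (up2 K))) + (\<psi> (insert 1 (up2 K)) + \<psi> (insert 0 (insert 1 (up2 K)))))"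
  proof (rule sum.reindex[unfolded comp_def])
    show "inj_on up2 (Pow {0..<n - 2})"
      by (rule inj_on_inverseI[where g=shift2]) (rule shift2_up2)
  qed
  also have "\<dots> = (\<Sum>K\<in>Pow {0..<n - 2}.
     \<psi> (up2 K) + \<psi> (insert 1 (up2 K)) + \<psi> (insert 0 (up2 K)) + \<psi> (insert 0 (insert 1 (up2 K))))"
    by (intro sum.cong refl) simp
  finally show ?thesis .
qed

lemma up2_ge3: assumes "0 \<notin> G" shows "\<forall>k\<in>up2 G. 3 \<le> k"
proof
  fix k assume "k \<in> up2 G"
  then obtain g where g: "g \<in> G" "k = g + 2" unfolding up2_def by auto
  then have "g \<noteq> 0" using assms by metis
  then show "3 \<le> k" using g by simp
qed

lemma sep_ins_big:
  assumes "\<forall>k\<in>Pk. 3 \<le> k"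
  shows "sep (insert 0 Y) Pk = sep Y Pk" "sep (insert 1 Y) Pk = sep Y Pk"
proof -
  have a: "\<And>k. k \<in> Pk \<Longrightarrow> k - 1 \<noteq> 0 \<and> k \<noteq> 0 \<and> k - 1 \<noteq> 1 \<and> k \<noteq> 1"
    using assms by fastforce
  show "sep (insert 0 Y) Pk = sep Y Pk" unfolding sep_def using a by (intro ball_cong refl) simp
  show "sep (insert 1 Y) Pk = sep Y Pk" unfolding sep_def using a by (intro ball_cong refl) simp
qed

lemma sep_up2: assumes G0: "0 \<notin> G" shows "sep (up2 K) (up2 G) = sep K G"
proof -
  have "sep (up2 K) (up2 G) = (\<forall>g\<in>G. (g + 2 - 1 \<in> up2 K) \<noteq> (g + 2 \<in> up2 K))"
    unfolding sep_def up2_def[of G] by simp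
  also have "\<dots> = (\<forall>g\<in>G. (g - 1 \<in> K) \<noteq> (g \<in> K))"
  proof (intro ball_cong refl)
    fix g assume "g \<in> G"
    then have "g \<noteq> 0" using G0 by metis
    then have "(g + 2 - 1 \<in> up2 K) = (g - 1 \<in> K)" unfolding up2_mem by auto
    moreover have "(g + 2 \<in> up2 K) = (g \<in> K)" unfolding up2_mem by auto
    ultimately show "((g + 2 - 1 \<in> up2 K) \<noteq> (g + 2 \<in> up2 K)) = ((g - 1 \<in> K) \<noteq> (g \<in> K))" by simp
  qed
  finally show ?thesis unfolding sep_def .
qed

lemma sep_ins1: "sep Y (insert 1 Pk) = (((0 \<in> Y) \<noteq> (1 \<in> Y)) \<and> sep Y Pk)"
  unfolding sep_def by simp

lemma h_ident:
  fixes c :: "nat set \<Rightarrow> rat"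
  assumes n: "2 \<le> n"
    and h_def: "\<And>D. h D = (\<Sum>J\<in>Pow {0..<n}. c J * (if D \<subseteq> J then 1 else 0))"
    and h'_def: "\<And>D. h' D = (\<Sum>K\<in>Pow {0..<n - 2}. c (up2 K) * (if D \<subseteq> K then 1 else 0))"
  shows "h (up2 K) - h (insert 1 (up2 K)) - h (insert 0 (up2 K)) + h (insert 0 (insert 1 (up2 K))) = h' K"
proof -
  let ?X = "up2 K"
  have "h ?X - h (insert 1 ?X) - h (insert 0 ?X) + h (insert 0 (insert 1 ?X))
     = (\<Sum>J\<in>Pow {0..<n}. c J * ((if ?X \<subseteq> J then 1 else 0) - (if insert 1 ?X \<subseteq> J then 1 else 0)
          - (if insert 0 ?X \<subseteq> J then 1 else 0) + (if insert 0 (insert 1 ?X) \<subseteq> J then 1 else 0)))"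
    unfolding h_def by (simp add: sum_subtractf sum.distrib[symmetric] algebra_simps)
  also have "\<dots> = (\<Sum>J\<in>Pow {0..<n}. if 0 \<notin> J \<and> 1 \<notin> J then c J * (if ?X \<subseteq> J then 1 else 0) else 0)"
  proof (intro sum.cong refl)
    fix J
    show "c J * ((if ?X \<subseteq> J then 1 else 0) - (if insert 1 ?X \<subseteq> J then 1 else 0)
          - (if insert 0 ?X \<subseteq> J then 1 else 0) + (if insert 0 (insert 1 ?X) \<subseteq> J then 1 else (0::rat)))
        = (if 0 \<notin> J \<and> 1 \<notin> J then c J * (if ?X \<subseteq> J then 1 else 0) else 0)"
      by (cases "0 \<in> J"; cases "1 \<in> J"; cases "?X \<subseteq> J") simp_all
  qed
  also have "\<dots> = (\<Sum>K'\<in>Pow {0..<n - 2}. c (up2 K') * (if ?X \<subseteq> up2 K' then 1 else 0))"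
    by (rule reindex01[OF n])
  also have "\<dots> = h' K"
  proof -
    have "inj (\<lambda>i::nat. i + 2)" by (simp add: inj_on_def)
    then have "\<And>K'. (?X \<subseteq> up2 K') = (K \<subseteq> K')" unfolding up2_def by (rule inj_image_subset_iff)
    then show ?thesis unfolding h'_def by simp
  qed
  finally show ?thesis .
qed

lemma commute_T:
  fixes c :: "nat set \<Rightarrow> rat"
  assumes n: "2 \<le> n" and G0: "0 \<notin> G" and Gf: "finite G"
  defines "h \<equiv> \<lambda>D. \<Sum>J\<in>Pow {0..<n}. c J * (if D \<subseteq> J then 1 else 0)"
  defines "h' \<equiv> \<lambda>D. \<Sum>K\<in>Pow {0..<n - 2}. c (up2 K) * (if D \<subseteq> K then 1 else 0)"
  shows "Tm n h (up2 G) - Tm n h (insert 1 (up2 G)) = Tm (n - 2) h' G"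
proof -
  have ge3: "\<forall>k\<in>up2 G. 3 \<le> k" by (rule up2_ge3[OF G0])
  have s0: "\<And>Y. sep (insert 0 Y) (up2 G) = sep Y (up2 G)" and s1: "\<And>Y. sep (insert 1 Y) (up2 G) = sep Y (up2 G)"
    using sep_ins_big[OF ge3] by auto
  have cu: "card (up2 G) = card G" unfolding up2_def by (rule card_image) (simp add: inj_on_def)
  have n1: "1 \<notin> up2 G" using G0 unfolding up2_mem by auto
  have fu: "finite (up2 G)" unfolding up2_def using Gf by simp
  have ci: "card (insert 1 (up2 G)) = card G + 1" using n1 fu cu by simp
  have nz: "\<And>K. 0 \<notin> up2 K" "\<And>K. 1 \<notin> up2 K" "\<And>K. Suc 0 \<notin> up2 K" unfolding up2_mem by auto
  define A where "A K = h (up2 K)" for K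
  define B where "B K = h (insert 1 (up2 K))" for K
  define C where "C K = h (insert 0 (up2 K))" for K
  define D where "D K = h (insert 0 (insert 1 (up2 K)))" for K
  have T1: "Tm n h (up2 G) = 2 ^ card G * (\<Sum>K\<in>Pow {0..<n - 2}. if sep K G then A K + B K + C K + D K else 0)"
    unfolding Tm_def cu split4[OF n] A_def B_def C_def D_def s0 s1 sep_up2[OF G0]
    by (intro arg_cong[where f="\<lambda>x. 2 ^ card G * x"] sum.cong refl) simp
  have T2: "Tm n h (insert 1 (up2 G)) = 2 ^ card G * (\<Sum>K\<in>Pow {0..<n - 2}. 2 * (if sep K G then B K + C K else 0))"
    unfolding Tm_def ci split4[OF n] A_def B_def C_def D_def sep_ins1 s0 s1 sep_up2[OF G0]
    by (simp add: nz sum_distrib_left) (intro sum.cong refl, simp)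
  have "Tm n h (up2 G) - Tm n h (insert 1 (up2 G))
      = 2 ^ card G * (\<Sum>K\<in>Pow {0..<n - 2}. if sep K G then A K - B K - C K + D K else 0)"
    unfolding T1 T2 right_diff_distrib[symmetric] sum_subtractf[symmetric]
    by (intro arg_cong[where f="\<lambda>x. 2 ^ card G * x"] sum.cong refl) simp
  also have "\<dots> = 2 ^ card G * (\<Sum>K\<in>Pow {0..<n - 2}. if sep K G then h' K else 0)"
  proof -
    have hd: "\<And>D. h D = (\<Sum>J\<in>Pow {0..<n}. c J * (if D \<subseteq> J then 1 else 0))" unfolding h_def by simp
    have h'd: "\<And>D. h' D = (\<Sum>K\<in>Pow {0..<n - 2}. c (up2 K) * (if D \<subseteq> K then 1 else 0))" unfolding h'_def by simp
    have hi: "\<And>K. h (up2 K) - h (insert 1 (up2 K)) - h (insert 0 (up2 K)) + h (insert 0 (insert 1 (up2 K))) = h' K"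
      by (rule h_ident[OF n hd h'd])
    show ?thesis unfolding A_def B_def C_def D_def hi ..
  qed
  also have "\<dots> = Tm (n - 2) h' G" unfolding Tm_def ..
  finally show ?thesis .
qed


lemma commutation:
  assumes n: "2 \<le> n" and f: "f \<in> SigmaB n"
  shows "pimap n (phi f) = phi (beta2 n f)"
proof -
  obtain c where fc: "f = (\<lambda>w. \<Sum>J\<in>Pow {0..<n}. c J * X n J w)" using f unfolding SigmaB_def by auto
  define h where "h = (\<lambda>D. \<Sum>J\<in>Pow {0..<n}. c J * (if D \<subseteq> J then 1 else (0::rat)))"
  define h' where "h' = (\<lambda>D. \<Sum>K\<in>Pow {0..<n - 2}. c (up2 K) * (if D \<subseteq> K then 1 else (0::rat)))"
  have hf: "f = (\<lambda>w. if w \<in> signed_perms n then h (Des w) else 0)"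
    unfolding fc h_def by (simp add: sumX)
  have bf: "beta2 n f = (\<lambda>w. if w \<in> signed_perms (n - 2) then h' (Des w) else 0)"
    unfolding beta2_formula2[OF n fc] h'_def by (simp add: sumX)
  have L: "pimap n (phi f) = (\<lambda>v. if v \<in> perms (n - 2) then Tm n h (up2 (Peak v)) - Tm n h (insert 1 (up2 (Peak v))) else 0)"
    by (rule pimap_formula[OF n phi_formula[OF hf]])
  have R: "phi (beta2 n f) = (\<lambda>v. if v \<in> perms (n - 2) then Tm (n - 2) h' (Peak v) else 0)"
    by (rule phi_formula[OF bf])
  show ?thesis
  proof
    fix v
    show "pimap n (phi f) v = phi (beta2 n f) v"
    proof (cases "v \<in> perms (n - 2)")
      case True
      have G0: "0 \<notin> Peak v" by (rule Peak_0)
      have Gf: "finite (Peak v)" using Peak_Fsets[of v] finite_subset unfolding Fsets_def by auto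
      have "Tm n h (up2 (Peak v)) - Tm n h (insert 1 (up2 (Peak v))) = Tm (n - 2) h' (Peak v)"
        unfolding h_def h'_def by (rule commute_T[OF n G0 Gf])
      then show ?thesis unfolding L R using True by simp
    next
      case False
      then show ?thesis unfolding L R by simp
    qed
  qed
qed

lemma phi_zero: "phi (\<lambda>_. 0) = (\<lambda>_. 0)"
  unfolding phi_def by simp

theorem corollary5p10:
  fixes n :: nat
  assumes "n \<ge> 2"
  shows "I01 n \<subseteq> SigmaB n
    \<and> beta2 n ` SigmaB n = SigmaB (n - 2)
    \<and> {f \<in> SigmaB n. beta2 n f = (\<lambda>_. 0)} = I01 n
    \<and> PeakAlgO n \<subseteq> PeakAlg n
    \<and> pimap n ` PeakAlg n = PeakAlg (n - 2)
    \<and> {f \<in> PeakAlg n. pimap n f = (\<lambda>_. 0)} = PeakAlgO n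
    \<and> phi ` I01 n = PeakAlgO n
    \<and> phi ` SigmaB n = PeakAlg n
    \<and> phi ` SigmaB (n - 2) = PeakAlg (n - 2)
    \<and> (\<forall>f\<in>SigmaB n. pimap n (phi f) = phi (beta2 n f))"
proof -
  have n: "2 \<le> n" using assms by simp
  have n1: "1 \<le> n" using assms by simp
  have phiI: "phi ` I01 n = PeakAlgO n"
  proof
    show "phi ` I01 n \<subseteq> PeakAlgO n"
    proof
      fix g assume "g \<in> phi ` I01 n"
      then obtain f where fI: "f \<in> I01 n" and g: "g = phi f" by auto
      have fS: "f \<in> SigmaB n" using fI I01_sub by auto
      have b0: "beta2 n f = (\<lambda>_. 0)" using fI beta2_kernel[OF n] by auto
      have gP: "g \<in> PeakAlg n" using phi_SigmaB_sub[of n] fS g by auto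
      have "pimap n g = (\<lambda>_. 0)" unfolding g commutation[OF n fS] b0 phi_zero ..
      then show "g \<in> PeakAlgO n" using gP pimap_kernel[OF n] by auto
    qed
    show "PeakAlgO n \<subseteq> phi ` I01 n" by (rule phi_I01_sup[OF n1])
  qed
  show ?thesis
  proof (intro conjI)
    show "I01 n \<subseteq> SigmaB n" by (rule I01_sub)
    show "beta2 n ` SigmaB n = SigmaB (n - 2)" by (rule beta2_image[OF n])
    show "{f \<in> SigmaB n. beta2 n f = (\<lambda>_. 0)} = I01 n" by (rule beta2_kernel[OF n])
    show "PeakAlgO n \<subseteq> PeakAlg n" by (rule PeakAlgO_sub)
    show "pimap n ` PeakAlg n = PeakAlg (n - 2)" by (rule pimap_image[OF n])
    show "{f \<in> PeakAlg n. pimap n f = (\<lambda>_. 0)} = PeakAlgO n" by (rule pimap_kernel[OF n])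
    show "phi ` I01 n = PeakAlgO n" by (rule phiI)
    show "phi ` SigmaB n = PeakAlg n" by (rule subset_antisym[OF phi_SigmaB_sub phi_SigmaB_sup])
    show "phi ` SigmaB (n - 2) = PeakAlg (n - 2)" by (rule subset_antisym[OF phi_SigmaB_sub phi_SigmaB_sup])
    show "\<forall>f\<in>SigmaB n. pimap n (phi f) = phi (beta2 n f)" using commutation[OF n] by simp
  qed

qed

end
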